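(* In the outer-domain setup, let $T>0$ and let $w\in C^{2,1}_{x,t}(U_T)\cap C(\overline{U_T})$ be bounded on $\overline{U_T}$ and satisfy $w(x,0)\le0$ in $U$ and $\mathcal Lw\le0$ in $U_T$. Then $\limsup_{r\to\infty}\sup_{\mathcal S_r\times[0,T]}w\le0$.
   Context: Setup. Fix $n\ge2$. For $i=1,2$: $g_i(s)=a^{(i)}_0+\sum_{j=1}^{N_i}a^{(i)}_js^{\alpha^{(i)}_j}$ ($s\ge0$), $a^{(i)}_0>0$, $a^{(i)}_j\ge0$, real $0<\alpha^{(i)}_1<\dots$; $G_i(u)=g_i(|u|)u$ ($u\in\mathbb R$). $f_1,f_2\in C([0,1])\cap C^1((0,1))$, $f_1(0)=0=f_2(1)$, $f_1'>0>f_2'$ on $(0,1)$; $p_c'\in C^1((0,1))$, $p_c'>0$; $F_i=1/(p_c'f_i)$. Fix $r_0>0$, $c_1,c_2$ with $c_1^2+c_2^2>0$, $s_0\in(0,1)$, and let $\hat S$ be a $C^1$ solution on $[r_0,\infty)$ of $\hat S'=G_2(c_2r^{1-n})F_2(\hat S)-G_1(c_1r^{1-n})F_1(\hat S)$, $\hat S(r_0)=s_0$, with $0<\underline s\le\hat S(r)\le\bar s<1$ for all $r\ge r_0$. For $|x|\ge r_0$: $S_*(x)=\hat S(|x|)$, $u_i^*(x)=c_i|x|^{-n}x$. For $u\in\mathbb R^n$: $\mathbf G_i(u)=g_i(|u|)u$, Jacobian $\mathbf G_i'(u)=g_i(|u|)I_n+g_i'(|u|)uu^T/|u|$ ($=g_i(0)I_n$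 at $u=0$). $B=F_1(S_* )\mathbf G_1'(u_1^* )+F_2(S_* )\mathbf G_2'(u_2^* )$, $A=B^{-1}$, $b=F_2'(S_* )\mathbf G_2(u_2^* )-F_1'(S_* )\mathbf G_1(u_1^* )$. $\mathcal Lw=\partial_tw-\nabla\cdot(A\nabla w)-b\cdot(A\nabla w)$. Outer domain: $U=\mathbb R^n\setminus\overline{B_{r_0}}$, $U_T=U\times(0,T]$, $\overline{U_T}=\overline U\times[0,T]$, $\mathcal S_r=\{|x|=r\}$. $C^{2,1}_{x,t}$: continuous with continuous $x$-derivatives up to order 2 and $t$-derivative of order 1. *)

theory Defs
  imports "HOL-Analysis.Analysis"
begin

definition gfun :: "nat \<Rightarrow> (nat \<Rightarrow> real) \<Rightarrow> (nat \<Rightarrow> real) \<Rightarrow> real \<Rightarrow> real" where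
  "gfun N a \<alpha> s = a 0 + (\<Sum>j=1..N. a j * s powr \<alpha> j)"

definition g_admissible :: "nat \<Rightarrow> (nat \<Rightarrow> real) \<Rightarrow> (nat \<Rightarrow> real) \<Rightarrow> bool" where
  "g_admissible N a \<alpha> \<longleftrightarrow> a 0 > 0 \<and> (\<forall>j\<in>{1..N}. a j \<ge> 0) \<and>
     (\<forall>j\<in>{1..N}. 0 < \<alpha> j) \<and> (\<forall>j. 1 \<le> j \<longrightarrow> j < N \<longrightarrow> \<alpha> j < \<alpha> (Suc j))"

definition Gsc :: "(real \<Rightarrow> real) \<Rightarrow> real \<Rightarrow> real" where
  "Gsc g u = g \<bar>u\<bar> * u"

definition Gvec :: "(real \<Rightarrow> real) \<Rightarrow> real^'n \<Rightarrow> real^'n" where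
  "Gvec g u = g (norm u) *\<^sub>R u"

definition GJac :: "(real \<Rightarrow> real) \<Rightarrow> real^'n \<Rightarrow> real^'n^'n" where
  "GJac g u = (if u = 0 then g 0 *\<^sub>R mat 1
      else g (norm u) *\<^sub>R mat 1 + (deriv g (norm u) / norm u) *\<^sub>R (\<chi> i j. u $ i * u $ j))"

definition Ffun :: "(real \<Rightarrow> real) \<Rightarrow> (real \<Rightarrow> real) \<Rightarrow> real \<Rightarrow> real" where
  "Ffun pcd f s = 1 / (pcd s * f s)"

definition ustar :: "real \<Rightarrow> real^'n \<Rightarrow> real^'n" where
  "ustar c x = (c * norm x powr (- real CARD('n))) *\<^sub>R x"

definition Bmat :: "(real \<Rightarrow> real) \<Rightarrow> (real \<Rightarrow> real) \<Rightarrow> (real \<Rightarrow> real) \<Rightarrow> (real \<Rightarrow> real)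
   \<Rightarrow> real \<Rightarrow> real \<Rightarrow> (real \<Rightarrow> real) \<Rightarrow> real^'n \<Rightarrow> real^'n^'n" where
  "Bmat F1 F2 g1 g2 c1 c2 Shat x =
     F1 (Shat (norm x)) *\<^sub>R GJac g1 (ustar c1 x) + F2 (Shat (norm x)) *\<^sub>R GJac g2 (ustar c2 x)"

definition Amat :: "(real \<Rightarrow> real) \<Rightarrow> (real \<Rightarrow> real) \<Rightarrow> (real \<Rightarrow> real) \<Rightarrow> (real \<Rightarrow> real)
   \<Rightarrow> real \<Rightarrow> real \<Rightarrow> (real \<Rightarrow> real) \<Rightarrow> real^'n \<Rightarrow> real^'n^'n" where
  "Amat F1 F2 g1 g2 c1 c2 Shat x = matrix_inv (Bmat F1 F2 g1 g2 c1 c2 Shat x)"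

definition bvec :: "(real \<Rightarrow> real) \<Rightarrow> (real \<Rightarrow> real) \<Rightarrow> (real \<Rightarrow> real) \<Rightarrow> (real \<Rightarrow> real)
   \<Rightarrow> real \<Rightarrow> real \<Rightarrow> (real \<Rightarrow> real) \<Rightarrow> real^'n \<Rightarrow> real^'n" where
  "bvec F1 F2 g1 g2 c1 c2 Shat x =
     deriv F2 (Shat (norm x)) *\<^sub>R Gvec g2 (ustar c2 x) - deriv F1 (Shat (norm x)) *\<^sub>R Gvec g1 (ustar c1 x)"

definition pdx :: "'n \<Rightarrow> (real^'n \<Rightarrow> real) \<Rightarrow> real^'n \<Rightarrow> real" where
  "pdx i h x = deriv (\<lambda>s. h (x + s *\<^sub>R axis i 1)) 0"

definition divg :: "(real^'n \<Rightarrow> real^'n) \<Rightarrow> real^'n \<Rightarrow> real" where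
  "divg V x = (\<Sum>i\<in>UNIV. pdx i (\<lambda>y. V y $ i) x)"

definition Lop :: "(real^'n \<Rightarrow> real^'n^'n) \<Rightarrow> (real^'n \<Rightarrow> real^'n)
   \<Rightarrow> (real^'n \<Rightarrow> real \<Rightarrow> real) \<Rightarrow> (real^'n \<Rightarrow> real \<Rightarrow> real^'n) \<Rightarrow> real^'n \<Rightarrow> real \<Rightarrow> real" where
  "Lop A b wt Dw x t = wt x t - divg (\<lambda>y. A y *v Dw y t) x - b x \<bullet> (A x *v Dw x t)"

end

theory Submission
  imports Defs
begin


lemma col_inner_sum:
  fixes Q H :: "real^'n^'n"
  assumes "orthogonal_matrix Q"
  shows "(\<Sum>i\<in>UNIV. (Q *v axis i 1) \<bullet> (H *v (Q *v axis i 1))) = (\<Sum>i\<in>UNIV. H$i$i)"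
proof -
  have QQ: "Q ** transpose Q = mat 1" using assms unfolding orthogonal_matrix_def by simp
  have col: "Q *v axis i 1 = (\<chi> j. Q$j$i)" for i
    by (simp add: vec_eq_iff matrix_vector_mult_def axis_def if_distrib cong: if_cong)
  have "(\<Sum>i\<in>UNIV. (Q *v axis i 1) \<bullet> (H *v (Q *v axis i 1)))
      = (\<Sum>i\<in>UNIV. \<Sum>j\<in>UNIV. \<Sum>l\<in>UNIV. Q$j$i * (H$j$l * Q$l$i))"
    unfolding col by (simp add: inner_vec_def matrix_vector_mult_def sum_distrib_left)
  also have "\<dots> = (\<Sum>j\<in>UNIV. \<Sum>i\<in>UNIV. \<Sum>l\<in>UNIV. Q$j$i * (H$j$l * Q$l$i))"
    by (rule sum.swap)
  also have "\<dots> = (\<Sum>j\<in>UNIV. \<Sum>l\<in>UNIV. \<Sum>i\<in>UNIV. Q$j$i * (H$j$l * Q$l$i))"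
    by (rule sum.cong[OF refl], rule sum.swap)
  also have "\<dots> = (\<Sum>j\<in>UNIV. \<Sum>l\<in>UNIV. H$j$l * (\<Sum>i\<in>UNIV. Q$j$i * Q$l$i))"
    by (simp add: sum_distrib_left mult_ac)
  also have "\<dots> = (\<Sum>j\<in>UNIV. \<Sum>l\<in>UNIV. H$j$l * (mat 1 :: real^'n^'n)$j$l)"
    using QQ by (simp add: matrix_matrix_mult_def transpose_def flip: QQ)
  also have "\<dots> = (\<Sum>j\<in>UNIV. H$j$j)"
    by (simp add: mat_def if_distrib cong: if_cong)
  finally show ?thesis .
qed

lemma trace_le_dir:
  fixes H :: "real^'n^'n" and y :: "real^'n"
  assumes y1: "norm y = 1" and neg: "\<And>h. h \<bullet> (H *v h) \<le> 0"
  shows "(\<Sum>i\<in>UNIV. H$i$i) \<le> y \<bullet> (H *v y)"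
proof -
  obtain k :: 'n where True by simp
  obtain Q where Q: "orthogonal_matrix Q" "Q *v axis k 1 = y"
    using orthogonal_matrix_exists_basis[OF y1] by metis
  have "(\<Sum>i\<in>UNIV. H$i$i) = (\<Sum>i\<in>UNIV. (Q *v axis i 1) \<bullet> (H *v (Q *v axis i 1)))"
    using col_inner_sum[OF Q(1)] by simp
  also have "\<dots> = (Q *v axis k 1) \<bullet> (H *v (Q *v axis k 1)) + (\<Sum>i\<in>UNIV-{k}. (Q *v axis i 1) \<bullet> (H *v (Q *v axis i 1)))"
    by (simp add: sum.remove)
  also have "\<dots> \<le> y \<bullet> (H *v y)"
    using Q(2) by (simp add: sum_nonpos neg)
  finally show ?thesis .
qed




definition Pm :: "real^'n \<Rightarrow> real^'n^'n" where
  "Pm y = (\<chi> i j. y$i * y$j / (norm y)^2)"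

lemma normsq_sum: "(norm (y::real^'n))^2 = (\<Sum>k\<in>UNIV. y$k * y$k)"
  by (simp add: power2_norm_eq_inner inner_vec_def)

lemma Pm_mult: fixes y :: "real^'n" assumes "y \<noteq> 0" shows "Pm y ** Pm y = Pm y"
proof -
  have n: "(norm y)^2 \<noteq> 0" using assms by simp
  have "(\<Sum>k\<in>UNIV. y$i * y$k / (norm y)^2 * (y$k * y$j / (norm y)^2)) = y$i * y$j / (norm y)^2" for i j
  proof -
    have "(\<Sum>k\<in>UNIV. y$i * y$k / (norm y)^2 * (y$k * y$j / (norm y)^2))
       = (y$i * y$j / ((norm y)^2 * (norm y)^2)) * (\<Sum>k\<in>UNIV. y$k * y$k)"
      by (simp add: sum_distrib_left sum_divide_distrib field_simps mult_ac)
    also have "\<dots> = y$i * y$j / (norm y)^2" using n by (simp add: normsq_sum[symmetric] field_simps power2_eq_square)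
    finally show ?thesis .
  qed
  then show ?thesis by (simp add: Pm_def matrix_matrix_mult_def vec_eq_iff)
qed

lemma Pm_vec: fixes y :: "real^'n" assumes "y \<noteq> 0" shows "Pm y *v y = y"
proof -
  have n: "(norm y)^2 \<noteq> 0" using assms by simp
  have "(\<Sum>k\<in>UNIV. y$i * y$k / (norm y)^2 * y$k) = y$i" for i
  proof -
    have "(\<Sum>k\<in>UNIV. y$i * y$k / (norm y)^2 * y$k) = (y$i / (norm y)^2) * (\<Sum>k\<in>UNIV. y$k * y$k)"
      by (simp add: sum_distrib_left sum_divide_distrib field_simps mult_ac)
    also have "\<dots> = y$i" using n by (simp add: normsq_sum[symmetric])
    finally show ?thesis .
  qed
  then show ?thesis by (simp add: Pm_def matrix_vector_mult_def vec_eq_iff)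
qed

lemma mm_add_rdistrib: fixes A B C :: "real^'n^'n" shows "(A + B) ** C = A ** C + B ** C"
  by (simp add: matrix_matrix_mult_def vec_eq_iff sum.distrib distrib_right)
lemma mm_scaleR_left: fixes A B :: "real^'n^'n" shows "(k *\<^sub>R A) ** B = k *\<^sub>R (A ** B)"
  by (simp add: matrix_matrix_mult_def vec_eq_iff sum_distrib_left mult_ac)
lemma mm_scaleR_right: fixes A B :: "real^'n^'n" shows "A ** (k *\<^sub>R B) = k *\<^sub>R (A ** B)"
  by (simp add: matrix_matrix_mult_def vec_eq_iff sum_distrib_left mult_ac)

lemma matrix_inv_eq:
  fixes B C :: "real^'n^'n"
  assumes "B ** C = mat 1" "C ** B = mat 1"
  shows "matrix_inv B = C"
proof -
  have ex: "\<exists>A'. B ** A' = mat 1 \<and> A' ** B = mat 1" using assms by blast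
  have "B ** matrix_inv B = mat 1 \<and> matrix_inv B ** B = mat 1"
    unfolding matrix_inv_def by (rule someI_ex[OF ex])
  then have "matrix_inv B = matrix_inv B ** (B ** C)" using assms by (simp add: matrix_mul_rid)
  also have "\<dots> = (matrix_inv B ** B) ** C" by (simp add: matrix_mul_assoc)
  also have "\<dots> = C" using \<open>B ** matrix_inv B = mat 1 \<and> matrix_inv B ** B = mat 1\<close> by (simp add: matrix_mul_lid)
  finally show ?thesis .
qed

lemma matrix_inv_PI:
  fixes y :: "real^'n"
  assumes y: "y \<noteq> 0" and p: "p \<noteq> 0" and m: "p + q \<noteq> 0"
  shows "matrix_inv (p *\<^sub>R mat 1 + q *\<^sub>R Pm y) = (1/p) *\<^sub>R mat 1 + (1/(p+q) - 1/p) *\<^sub>R Pm y"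
proof (rule matrix_inv_eq)
  have c: "p * (1 / (p + q) - 1 / p) + q * (1/p) + q * (1 / (p + q) - 1 / p) = 0"
  proof -
    have d: "1 / (p + q) - 1 / p = -q/(p*(p+q))" using p m by (simp add: field_simps)
    have pp: "p*p + p*q \<noteq> 0" using p m by (metis distrib_left mult_eq_0_iff)
    show ?thesis unfolding d using p m pp by (simp add: field_simps)
  qed
  have gen: "(p' *\<^sub>R mat 1 + q' *\<^sub>R P) ** (a *\<^sub>R mat 1 + k *\<^sub>R P) = (p'*a) *\<^sub>R mat 1 + (p'*k + q'*a + q'*k) *\<^sub>R P"
    if "P ** P = P" for p' q' a k :: real and P :: "real^'n^'n"
    using that by (simp add: matrix_add_ldistrib mm_add_rdistrib mm_scaleR_left mm_scaleR_right
        matrix_mul_lid matrix_mul_rid scaleR_add_left scaleR_add_right algebra_simps)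
  have e1: "(p *\<^sub>R mat 1 + q *\<^sub>R Pm y) ** ((1/p) *\<^sub>R mat 1 + (1/(p+q) - 1/p) *\<^sub>R Pm y)
     = mat 1 + (p * (1 / (p + q) - 1 / p) + q * (1/p) + q * (1 / (p + q) - 1 / p)) *\<^sub>R Pm y"
    using p gen[OF Pm_mult[OF y]] by simp
  have e2: "((1/p) *\<^sub>R mat 1 + (1/(p+q) - 1/p) *\<^sub>R Pm y) ** (p *\<^sub>R mat 1 + q *\<^sub>R Pm y)
     = mat 1 + ((1/p) * q + (1 / (p + q) - 1 / p) * p + (1 / (p + q) - 1 / p)*q) *\<^sub>R Pm y"
    using p gen[OF Pm_mult[OF y]] by simp
  show "(p *\<^sub>R mat 1 + q *\<^sub>R Pm y) ** ((1/p) *\<^sub>R mat 1 + (1/(p+q) - 1/p) *\<^sub>R Pm y) = mat 1"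
    using e1 c by simp
  show "((1/p) *\<^sub>R mat 1 + (1/(p+q) - 1/p) *\<^sub>R Pm y) ** (p *\<^sub>R mat 1 + q *\<^sub>R Pm y) = mat 1"
    using e2 c by (simp add: mult_ac)
qed

lemma trace_A_neg:
  fixes H :: "real^'n^'n" and y :: "real^'n"
  assumes y: "y \<noteq> 0" and p: "p > 0" and k: "1/p + \<kappa> \<ge> 0"
    and neg: "\<And>h. h \<bullet> (H *v h) \<le> 0"
  shows "(\<Sum>i\<in>UNIV. (((1/p) *\<^sub>R mat 1 + \<kappa> *\<^sub>R Pm y) *v (H *v axis i 1)) $ i) \<le> 0"
proof -
  define Q where "Q = (y /\<^sub>R norm y) \<bullet> (H *v (y /\<^sub>R norm y))"
  have ny: "norm (y /\<^sub>R norm y) = 1" using y by simp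
  have tr: "(\<Sum>i\<in>UNIV. H$i$i) \<le> Q" unfolding Q_def by (rule trace_le_dir[OF ny neg])
  have Qn: "Q \<le> 0" unfolding Q_def by (rule neg)
  have Qe: "Q = (\<Sum>i\<in>UNIV. \<Sum>j\<in>UNIV. y$i * y$j / (norm y)^2 * H$j$i)"
    unfolding Q_def
    apply (simp add: inner_vec_def matrix_vector_mult_def sum_distrib_left field_simps power2_eq_square mult_ac
        flip: sum_divide_distrib)
    apply (rule disjI2, subst sum.swap) by (simp add: mult_ac)
  have col: "H *v axis i 1 = (\<chi> j. H$j$i)" for i
    by (simp add: vec_eq_iff matrix_vector_mult_def axis_def if_distrib cong: if_cong)
  have "(\<Sum>i\<in>UNIV. (((1/p) *\<^sub>R mat 1 + \<kappa> *\<^sub>R Pm y) *v (H *v axis i 1)) $ i)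
      = (1/p) * (\<Sum>i\<in>UNIV. H$i$i) + \<kappa> * (\<Sum>i\<in>UNIV. \<Sum>j\<in>UNIV. y$i * y$j / (norm y)^2 * H$j$i)"
    unfolding col matrix_vector_mult_add_rdistrib scaleR_matrix_vector_assoc[symmetric] matrix_vector_mul_lid
    by (simp add: matrix_vector_mult_def Pm_def sum.distrib sum_distrib_left algebra_simps sum_divide_distrib)
  also have "\<dots> = (1/p) * (\<Sum>i\<in>UNIV. H$i$i) + \<kappa> * Q" using Qe by simp
  also have "\<dots> \<le> (1/p) * Q + \<kappa> * Q" using tr p by (simp add: divide_right_mono)
  also have "\<dots> = (1/p + \<kappa>) * Q" by (simp add: algebra_simps)
  also have "\<dots> \<le> 0" using k Qn by (simp add: mult_nonneg_nonpos)
  finally show ?thesis .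
qed




lemma deriv_left_max:
  fixes f :: "real \<Rightarrow> real"
  assumes d: "(f has_real_derivative d) (at t within {0<..T})" and t: "0 < t" "t \<le> T"
    and mx: "\<forall>s\<in>{0<..<t}. f s \<le> f t"
  shows "0 \<le> d"
proof -
  have lim: "((\<lambda>y. (f y - f t) / (y - t)) \<longlongrightarrow> d) (at t within {0<..<t})"
    using d unfolding has_field_derivative_iff
    by (rule tendsto_within_subset) (use t in auto)
  have F: "at t within {0<..<t} = at_left t"
    by (rule at_within_nhd[of _ "{0<..}"]) (use t in auto)
  have ev: "eventually (\<lambda>y. 0 \<le> (f y - f t) / (y - t)) (at t within {0<..<t})"
    unfolding eventually_at_filter using mx
    by (intro always_eventually) (auto intro!: divide_nonpos_neg)
  show ?thesis
    by (rule tendsto_lowerbound[OF lim ev]) (simp add: F)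
qed

lemma second_order_max:
  fixes \<phi> \<phi>' :: "real \<Rightarrow> real"
  assumes dl: "\<delta> > 0" and mx: "\<forall>s\<in>{-\<delta><..<\<delta>}. \<phi> s \<le> \<phi> 0"
    and d1: "\<forall>s\<in>{-\<delta><..<\<delta>}. (\<phi> has_real_derivative \<phi>' s) (at s)"
    and z: "\<phi>' 0 = 0" and d2: "(\<phi>' has_real_derivative d) (at 0)"
  shows "d \<le> 0"
proof (rule ccontr)
  assume "\<not> d \<le> 0" then have dp: "d > 0" by simp
  have "((\<lambda>y. (\<phi>' y - \<phi>' 0) / (y - 0)) \<longlongrightarrow> d) (at 0)"
    using d2 unfolding has_field_derivative_iff .
  then have "((\<lambda>y. (\<phi>' y - \<phi>' 0) / (y - 0)) \<longlongrightarrow> d) (at_right 0)"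
    by (rule tendsto_mono[rotated]) (simp add: at_le)
  from order_tendstoD(1)[OF this dp] have "eventually (\<lambda>y. 0 < \<phi>' y / y) (at_right 0)"
    using z by simp
  then obtain b where b: "b > 0" "\<And>y. 0 < y \<Longrightarrow> y < b \<Longrightarrow> 0 < \<phi>' y / y"
    unfolding eventually_at_right_field by auto
  define s where "s = min b \<delta> / 2"
  have s: "0 < s" "s < b" "s < \<delta>" using b dl unfolding s_def by auto
  obtain zz where zz: "0 < zz" "zz < s" "\<phi> s - \<phi> 0 = (s - 0) * \<phi>' zz"
    using MVT2[OF s(1), of \<phi> \<phi>'] d1 s dl by force
  have "0 < \<phi>' zz / zz" using b(2)[of zz] zz s by simp
  then have "0 < \<phi>' zz" using zz by (simp add: zero_less_divide_iff)
  then have "s * \<phi>' zz > 0" using zz s by (simp add: mult_pos_pos)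
  then have "\<phi> s > \<phi> 0" using zz(3) by simp
  moreover have "\<phi> s \<le> \<phi> 0" using mx s dl by simp
  ultimately show False by simp
qed

lemma deriv_cont_mult_zero:
  fixes f g :: "real \<Rightarrow> real"
  assumes c: "isCont f a" and g0: "g a = 0" and dg: "(g has_real_derivative d) (at a)"
  shows "((\<lambda>s. f s * g s) has_real_derivative f a * d) (at a)"
proof -
  have l1: "((\<lambda>y. (g y - g a) / (y - a)) \<longlongrightarrow> d) (at a)"
    using dg unfolding has_field_derivative_iff .
  have l2: "(f \<longlongrightarrow> f a) (at a)" using c by (simp add: continuous_at)
  have "((\<lambda>y. f y * ((g y - g a) / (y - a))) \<longlongrightarrow> f a * d) (at a)"
    by (rule tendsto_mult[OF l2 l1])
  then show ?thesis unfolding has_field_derivative_iff using g0 by simp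
qed

lemma deriv_Av_zero:
  fixes A :: "real^'n \<Rightarrow> real^'n^'n" and z :: "real^'n \<Rightarrow> real^'n"
  assumes cA: "isCont A x" and z0: "z x = 0" and dz: "(z has_derivative Dz) (at x)"
  shows "((\<lambda>s. (A (x + s *\<^sub>R e) *v z (x + s *\<^sub>R e)) $ i) has_real_derivative (A x *v Dz e) $ i) (at 0)"
proof -
  have lin: "linear Dz" using dz by (rule has_derivative_linear)
  have dg: "((\<lambda>s. x + s *\<^sub>R e) has_derivative (\<lambda>s. s *\<^sub>R e)) (at 0)"
    by (auto intro!: derivative_eq_intros)
  have dz': "(z has_derivative Dz) (at ((\<lambda>s. x + s *\<^sub>R e) 0))" using dz by simp
  have dzc: "((\<lambda>s. z (x + s *\<^sub>R e)) has_derivative (\<lambda>s. Dz (s *\<^sub>R e))) (at 0)"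
    using has_derivative_compose[OF dg dz'] by (simp add: o_def)
  have dzj: "((\<lambda>s. z (x + s *\<^sub>R e) $ j) has_real_derivative (Dz e) $ j) (at 0)" for j
  proof -
    have "((\<lambda>s. z (x + s *\<^sub>R e) $ j) has_derivative (\<lambda>s. Dz (s *\<^sub>R e) $ j)) (at 0)"
      using bounded_linear.has_derivative[OF bounded_linear_vec_nth dzc] .
    moreover have "(\<lambda>s. Dz (s *\<^sub>R e) $ j) = (\<lambda>s. (Dz e $ j) * s)"
      using lin by (simp add: linear_scale fun_eq_iff)
    ultimately show ?thesis by (simp add: has_field_derivative_def mult.commute[of _ "Dz e $ j"])
  qed
  have cAj: "isCont (\<lambda>s. A (x + s *\<^sub>R e) $ i $ j) 0" for j
  proof -
    have "isCont (\<lambda>s. x + s *\<^sub>R e) 0" by (intro continuous_intros)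
    moreover have "isCont A ((\<lambda>s. x + s *\<^sub>R e) 0)" using cA by simp
    ultimately have "isCont (\<lambda>s. A (x + s *\<^sub>R e)) 0" by (rule isCont_o2)
    then show ?thesis by (intro continuous_intros)
  qed
  have "((\<lambda>s. \<Sum>j\<in>UNIV. A (x + s *\<^sub>R e) $ i $ j * z (x + s *\<^sub>R e) $ j) has_real_derivative
          (\<Sum>j\<in>UNIV. A (x + 0 *\<^sub>R e) $ i $ j * Dz e $ j)) (at 0)"
    by (rule DERIV_sum, rule deriv_cont_mult_zero[OF cAj]) (use z0 dzj in simp_all)
  then show ?thesis by (simp add: matrix_vector_mult_def)
qed

lemma radial_comp_deriv:
  fixes x :: "real^'n" and \<phi> :: "real \<Rightarrow> real"
  assumes x: "x \<noteq> 0" and d: "(\<phi> has_real_derivative \<phi>') (at (norm x))"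
  shows "((\<lambda>s. \<phi> (norm (x + s *\<^sub>R axis i 1)) * (x + s *\<^sub>R axis i 1) $ i) has_real_derivative
           (\<phi>' * (x$i / norm x) * x$i + \<phi> (norm x))) (at 0)"
proof -
  have dn: "(norm has_derivative (\<lambda>h. x \<bullet> h / norm x)) (at ((\<lambda>s. x + s *\<^sub>R axis i 1) 0))"
    using has_derivative_norm[OF x] by (simp add: sgn_div_norm inner_commute divide_inverse mult.commute)
  have dg: "((\<lambda>s. x + s *\<^sub>R axis i 1) has_derivative (\<lambda>s. s *\<^sub>R axis i 1)) (at 0)"
    by (auto intro!: derivative_eq_intros)
  have "((\<lambda>s. norm (x + s *\<^sub>R axis i 1)) has_derivative (\<lambda>s. x \<bullet> (s *\<^sub>R axis i 1) / norm x)) (at 0)"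
    using has_derivative_compose[OF dg dn] by (simp add: o_def)
  moreover have "(\<lambda>s. x \<bullet> (s *\<^sub>R axis i 1) / norm x) = (\<lambda>s. (x$i / norm x) * s)"
    by (simp add: fun_eq_iff inner_axis)
  ultimately have dn2: "((\<lambda>s. norm (x + s *\<^sub>R axis i 1)) has_real_derivative (x$i / norm x)) (at 0)"
    unfolding has_field_derivative_def by (metis (no_types, lifting) mult.commute ext)
  have d': "(\<phi> has_real_derivative \<phi>') (at (norm (x + 0 *\<^sub>R axis i 1)))" using d by simp
  have dphi: "((\<lambda>s. \<phi> (norm (x + s *\<^sub>R axis i 1))) has_real_derivative \<phi>' * (x$i / norm x)) (at 0)"
    using DERIV_chain2[OF d' dn2] .
  have dc: "((\<lambda>s. (x + s *\<^sub>R axis i 1) $ i) has_real_derivative 1) (at 0)"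
    by (simp add: axis_def) (auto intro!: derivative_eq_intros)
  show ?thesis using DERIV_mult[OF dphi dc] by simp
qed




definition hfun :: "nat \<Rightarrow> (nat \<Rightarrow> real) \<Rightarrow> (nat \<Rightarrow> real) \<Rightarrow> real \<Rightarrow> real" where
  "hfun N a \<alpha> s = a 0 + (\<Sum>j=1..N. a j * (1 + \<alpha> j) * s powr \<alpha> j)"

lemma gfun_ge: assumes "g_admissible N a \<alpha>" "0 \<le> s" shows "a 0 \<le> gfun N a \<alpha> s"
  using assms unfolding g_admissible_def gfun_def by (auto intro!: sum_nonneg)

lemma hfun_ge: assumes "g_admissible N a \<alpha>" "0 \<le> s" shows "a 0 \<le> hfun N a \<alpha> s"
  using assms unfolding g_admissible_def hfun_def
  by (auto intro!: sum_nonneg mult_nonneg_nonneg simp: less_imp_le)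

lemma gfun_deriv:
  assumes "0 < s"
  shows "(gfun N a \<alpha> has_real_derivative (\<Sum>j=1..N. a j * (\<alpha> j * s powr (\<alpha> j - 1)))) (at s)"
proof -
  have "((\<lambda>s. \<Sum>j=1..N. a j * s powr \<alpha> j) has_real_derivative (\<Sum>j=1..N. a j * (\<alpha> j * s powr (\<alpha> j - 1)))) (at s)"
    by (rule DERIV_sum, rule DERIV_cmult, rule has_real_derivative_powr[OF assms])
  then have "((\<lambda>s. a 0 + (\<Sum>j=1..N. a j * s powr \<alpha> j)) has_real_derivative 0 + (\<Sum>j=1..N. a j * (\<alpha> j * s powr (\<alpha> j - 1)))) (at s)"
    by (intro DERIV_add DERIV_const)
  then show ?thesis unfolding gfun_def by simp
qed

lemma deriv_gfun:
  assumes "0 < s"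
  shows "deriv (gfun N a \<alpha>) s = (\<Sum>j=1..N. a j * (\<alpha> j * s powr (\<alpha> j - 1)))"
  using DERIV_imp_deriv[OF gfun_deriv[OF assms]] .

lemma g_plus_deriv:
  assumes adm: "g_admissible N a \<alpha>" and s: "0 \<le> s"
  shows "gfun N a \<alpha> s + deriv (gfun N a \<alpha>) s * s = hfun N a \<alpha> s"
proof (cases "s = 0")
  case True then show ?thesis by (simp add: gfun_def hfun_def)
next
  case False then have sp: "0 < s" using s by simp
  have "(\<Sum>j=1..N. a j * (\<alpha> j * s powr (\<alpha> j - 1))) * s = (\<Sum>j=1..N. a j * \<alpha> j * s powr \<alpha> j)"
    unfolding sum_distrib_right
  proof (rule sum.cong[OF refl])
    fix j
    have "s powr (\<alpha> j - 1) * s = s powr \<alpha> j" using sp by (simp add: powr_diff)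
    then show "a j * (\<alpha> j * s powr (\<alpha> j - 1)) * s = a j * \<alpha> j * s powr \<alpha> j"
      by (metis mult.assoc)
  qed
  then show ?thesis using sp
    by (simp add: deriv_gfun gfun_def hfun_def sum.distrib algebra_simps)
qed

lemma deriv_gfun_nonneg:
  assumes adm: "g_admissible N a \<alpha>" and s: "0 \<le> s"
  shows "0 \<le> deriv (gfun N a \<alpha>) s * s"
proof (cases "s = 0")
  case True then show ?thesis by simp
next
  case False then have sp: "0 < s" using s by simp
  show ?thesis using adm sp unfolding deriv_gfun[OF sp] g_admissible_def
    by (auto intro!: mult_nonneg_nonneg sum_nonneg simp: less_imp_le)
qed

lemma gfun_cont: assumes "g_admissible N a \<alpha>" shows "continuous_on {0..} (gfun N a \<alpha>)"
  unfolding gfun_def using assms unfolding g_admissible_def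
  by (intro continuous_intros continuous_on_powr') auto

lemma hfun_cont: assumes "g_admissible N a \<alpha>" shows "continuous_on {0..} (hfun N a \<alpha>)"
  unfolding hfun_def using assms unfolding g_admissible_def
  by (intro continuous_intros continuous_on_powr') auto

lemma hfun_diff: assumes "0 < s" shows "hfun N a \<alpha> differentiable (at s)"
proof -
  have "((\<lambda>s. \<Sum>j=1..N. a j * (1 + \<alpha> j) * s powr \<alpha> j) has_real_derivative (\<Sum>j=1..N. a j * (1 + \<alpha> j) * (\<alpha> j * s powr (\<alpha> j - 1)))) (at s)"
    by (rule DERIV_sum, rule DERIV_cmult, rule has_real_derivative_powr[OF assms])
  then have "((\<lambda>s. a 0 + (\<Sum>j=1..N. a j * (1 + \<alpha> j) * s powr \<alpha> j)) has_real_derivative 0 + (\<Sum>j=1..N. a j * (1 + \<alpha> j) * (\<alpha> j * s powr (\<alpha> j - 1)))) (at s)"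
    by (intro DERIV_add DERIV_const)
  then show ?thesis unfolding hfun_def using real_differentiable_def by blast
qed




lemma ustar_norm:
  fixes y :: "real^'n"
  shows "norm (ustar c y) = \<bar>c\<bar> * (norm y powr (- real CARD('n)) * norm y)"
  unfolding ustar_def by (simp add: abs_mult)

lemma ustar_zero_iff:
  fixes y :: "real^'n" assumes "y \<noteq> 0" shows "ustar c y = 0 \<longleftrightarrow> c = 0"
  using assms unfolding ustar_def by simp

lemma GJac_ustar:
  fixes y :: "real^'n" and c :: real
  assumes y: "y \<noteq> 0"
  defines "\<sigma> \<equiv> \<bar>c\<bar> * (norm y powr (- real CARD('n)) * norm y)"
  shows "GJac g (ustar c y) = g \<sigma> *\<^sub>R mat 1 + (deriv g \<sigma> * \<sigma>) *\<^sub>R Pm y"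
proof (cases "c = 0")
  case True then show ?thesis by (simp add: GJac_def ustar_def \<sigma>_def)
next
  case False
  define a where "a = norm y powr (- real CARD('n))"
  have a: "a > 0" using y unfolding a_def by simp
  have ny: "norm y > 0" using y by simp
  have u: "ustar c y = (c * a) *\<^sub>R y" unfolding ustar_def a_def by simp
  have un: "norm (ustar c y) = \<sigma>" unfolding \<sigma>_def ustar_norm ..
  have nz: "ustar c y \<noteq> 0" using ustar_zero_iff[OF y] False by simp
  have sp: "\<sigma> > 0" unfolding \<sigma>_def using False a ny a_def by simp
  have ent: "deriv g \<sigma> / \<sigma> * (ustar c y $ i * ustar c y $ j) = deriv g \<sigma> * \<sigma> * (y$i * y$j / (norm y)^2)" for i j
  proof -
    have s': "\<sigma> = \<bar>c\<bar> * a * norm y" unfolding \<sigma>_def a_def by simp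
    have k: "c * a * (c * a) / \<sigma> = \<sigma> / (norm y)^2"
    proof -
      have "c * a * (c * a) = \<bar>c\<bar> * a * (\<bar>c\<bar> * a)" by (metis abs_mult_self_eq mult.assoc mult.commute)
      then show ?thesis unfolding s' using False a ny by (simp add: divide_simps power2_eq_square)
    qed
    have "deriv g \<sigma> / \<sigma> * (ustar c y $ i * ustar c y $ j) = deriv g \<sigma> * (c * a * (c * a) / \<sigma>) * (y$i * y$j)"
      unfolding u by (simp add: mult_ac)
    also have "\<dots> = deriv g \<sigma> * \<sigma> * (y$i * y$j / (norm y)^2)" unfolding k by simp
    finally show ?thesis .
  qed
  have "GJac g (ustar c y) = g \<sigma> *\<^sub>R mat 1 + (deriv g \<sigma> / \<sigma>) *\<^sub>R (\<chi> i j. ustar c y $ i * ustar c y $ j)"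
    unfolding GJac_def using nz un by simp
  also have "(deriv g \<sigma> / \<sigma>) *\<^sub>R (\<chi> i j. ustar c y $ i * ustar c y $ j) = (deriv g \<sigma> * \<sigma>) *\<^sub>R Pm y"
    unfolding Pm_def vec_eq_iff using ent by simp
  finally show ?thesis .
qed




lemma C1_real_deriv:
  fixes f :: "real \<Rightarrow> real"
  assumes "f C1_differentiable_on S" "s \<in> S"
  shows "(f has_real_derivative vector_derivative f (at s)) (at s)"
  using assms unfolding C1_differentiable_on_eq has_real_derivative_iff_has_vector_derivative
  by (auto simp: vector_derivative_works[symmetric])

lemma C1_vd_cont:
  fixes f :: "real \<Rightarrow> real"
  assumes "f C1_differentiable_on S"
  shows "continuous_on S (\<lambda>s. vector_derivative f (at s))"
  using assms unfolding C1_differentiable_on_eq by auto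

lemma C1_cont:
  fixes f :: "real \<Rightarrow> real"
  assumes "f C1_differentiable_on S"
  shows "continuous_on S f"
  using assms unfolding C1_differentiable_on_eq
  by (auto intro!: continuous_at_imp_continuous_on differentiable_imp_continuous_within)

lemma pos_incr:
  fixes f :: "real \<Rightarrow> real"
  assumes c: "continuous_on {0..1} f" and C1: "f C1_differentiable_on {0<..<1}" and f0: "f 0 = 0"
    and m: "\<forall>s\<in>{0<..<1}. deriv f s > 0" and s: "0 < s" "s < 1"
  shows "f s > 0"
proof -
  have "\<exists>l z. 0 < z \<and> z < s \<and> DERIV f z :> l \<and> f s - f 0 = (s - 0) * l"
    by (rule MVT) (use s c C1 in \<open>auto intro: continuous_on_subset simp: C1_differentiable_on_eq\<close>)
  then obtain l z where z: "0 < z" "z < s" "DERIV f z :> l" "f s - f 0 = (s - 0) * l" by blast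
  have "l = deriv f z" using DERIV_imp_deriv[OF z(3)] by simp
  then have "l > 0" using m z s by auto
  then show ?thesis using z f0 s by simp
qed

lemma pos_decr:
  fixes f :: "real \<Rightarrow> real"
  assumes c: "continuous_on {0..1} f" and C1: "f C1_differentiable_on {0<..<1}" and f1: "f 1 = 0"
    and m: "\<forall>s\<in>{0<..<1}. deriv f s < 0" and s: "0 < s" "s < 1"
  shows "f s > 0"
proof -
  have "\<exists>l z. s < z \<and> z < 1 \<and> DERIV f z :> l \<and> f 1 - f s = (1 - s) * l"
    by (rule MVT) (use s c C1 in \<open>auto intro: continuous_on_subset simp: C1_differentiable_on_eq\<close>)
  then obtain l z where z: "s < z" "z < 1" "DERIV f z :> l" "f 1 - f s = (1 - s) * l" by blast
  have "l = deriv f z" using DERIV_imp_deriv[OF z(3)] by simp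
  then have "l < 0" using m z s by auto
  then have "(1 - s) * l < 0" using s by (simp add: mult_pos_neg)
  then show ?thesis using z f1 by simp
qed

lemma F_props:
  fixes pcd f :: "real \<Rightarrow> real"
  assumes pC1: "pcd C1_differentiable_on {0<..<1}" and fC1: "f C1_differentiable_on {0<..<1}"
    and pp: "\<forall>s\<in>{0<..<1}. pcd s > 0" and fp: "\<forall>s\<in>{0<..<1}. f s > 0"
  shows "\<forall>s\<in>{0<..<1}. Ffun pcd f s > 0"
    and "\<forall>s\<in>{0<..<1}. (Ffun pcd f has_real_derivative deriv (Ffun pcd f) s) (at s)"
    and "continuous_on {0<..<1} (Ffun pcd f)"
    and "continuous_on {0<..<1} (deriv (Ffun pcd f))"
proof -
  show "\<forall>s\<in>{0<..<1}. Ffun pcd f s > 0" using pp fp by (simp add: Ffun_def)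
  have pp': "pcd s \<noteq> 0" "f s \<noteq> 0" if "s \<in> {0<..<1}" for s using pp fp that by (metis less_irrefl)+
  define P' where "P' s = vector_derivative pcd (at s)" for s
  define f' where "f' s = vector_derivative f (at s)" for s
  define D where "D s = - (P' s * f s + pcd s * f' s) / (pcd s * f s)^2" for s
  have dF: "(Ffun pcd f has_real_derivative D s) (at s)" if s: "s \<in> {0<..<1}" for s
  proof -
    have d1: "(pcd has_real_derivative P' s) (at s)" unfolding P'_def by (rule C1_real_deriv[OF pC1 s])
    have d2: "(f has_real_derivative f' s) (at s)" unfolding f'_def by (rule C1_real_deriv[OF fC1 s])
    have nz: "pcd s * f s \<noteq> 0" using pp' s by auto
    have e: "Ffun pcd f = (\<lambda>s. inverse (pcd s * f s))" by (simp add: Ffun_def fun_eq_iff divide_inverse)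
    have "- ((P' s * f s + f' s * pcd s) * inverse ((pcd s * f s) ^ Suc (Suc 0))) = D s"
      unfolding D_def using nz by (simp add: divide_inverse power2_eq_square mult_ac add_ac) (simp add: algebra_simps)
    with DERIV_inverse_fun[OF DERIV_mult[OF d1 d2] nz]
    show ?thesis unfolding e by simp
  qed
  then show "\<forall>s\<in>{0<..<1}. (Ffun pcd f has_real_derivative deriv (Ffun pcd f) s) (at s)"
    using DERIV_imp_deriv by metis
  show "continuous_on {0<..<1} (Ffun pcd f)"
    using dF by (intro continuous_at_imp_continuous_on) (meson DERIV_isCont greaterThanLessThan_iff)
  have cD: "continuous_on {0<..<1} D"
    unfolding D_def P'_def f'_def
    using C1_vd_cont[OF pC1] C1_vd_cont[OF fC1] C1_cont[OF pC1] C1_cont[OF fC1] pp'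
    by (intro continuous_intros) auto
  show "continuous_on {0<..<1} (deriv (Ffun pcd f))"
    using cD by (rule continuous_on_eq) (use dF DERIV_imp_deriv in metis)
qed

lemma line_deriv:
  fixes f :: "real^'n \<Rightarrow> real"
  assumes "(f has_derivative Df) (at (x + s *\<^sub>R h))"
  shows "((\<lambda>u. f (x + u *\<^sub>R h)) has_real_derivative Df h) (at s)"
proof -
  have lin: "linear Df" using assms by (rule has_derivative_linear)
  have dg: "((\<lambda>u. x + u *\<^sub>R h) has_derivative (\<lambda>u. u *\<^sub>R h)) (at s)"
    by (auto intro!: derivative_eq_intros)
  have "((\<lambda>u. f (x + u *\<^sub>R h)) has_derivative (\<lambda>u. Df (u *\<^sub>R h))) (at s)"
    using has_derivative_compose[OF dg, of f Df] assms by (simp add: o_def)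
  moreover have "(\<lambda>u. Df (u *\<^sub>R h)) = (\<lambda>u. Df h * u)"
    using lin by (simp add: linear_scale fun_eq_iff mult.commute)
  ultimately show ?thesis by (simp add: has_field_derivative_def)
qed

lemma line_inner_deriv:
  fixes z :: "real^'n \<Rightarrow> real^'n"
  assumes "(z has_derivative Dz) (at x)"
  shows "((\<lambda>s. z (x + s *\<^sub>R h) \<bullet> h) has_real_derivative (Dz h \<bullet> h)) (at 0)"
proof -
  have "((\<lambda>y. z y \<bullet> h) has_derivative (\<lambda>k. Dz k \<bullet> h)) (at (x + 0 *\<^sub>R h))"
    using assms by (auto intro!: derivative_eq_intros)
  from line_deriv[OF this] show ?thesis .
qed




lemma core:
  fixes x :: "real^'n" and t T :: real and Om :: "(real^'n) set"
    and A :: "real^'n \<Rightarrow> real^'n^'n" and bv G :: "real^'n \<Rightarrow> real^'n"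
    and w wt \<Psi> :: "real^'n \<Rightarrow> real \<Rightarrow> real" and Dw :: "real^'n \<Rightarrow> real \<Rightarrow> real^'n"
    and D2 :: "real^'n^'n" and \<phi> :: "real \<Rightarrow> real"
  assumes Om: "open Om" "x \<in> Om" and t: "0 < t" "t \<le> T"
    and mxs: "\<forall>y\<in>Om. w y t - \<Psi> y t \<le> w x t - \<Psi> x t"
    and mxt: "\<forall>s\<in>{0<..<t}. w x s - \<Psi> x s \<le> w x t - \<Psi> x t"
    and dwt: "((\<lambda>s. w x s) has_real_derivative wt x t) (at t within {0<..T})"
    and dPt: "((\<lambda>s. \<Psi> x s) has_real_derivative Pt) (at t)"
    and dwx: "\<forall>y\<in>Om. ((\<lambda>y. w y t) has_derivative (\<lambda>h. Dw y t \<bullet> h)) (at y)"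
    and dPx: "\<forall>y\<in>Om. ((\<lambda>y. \<Psi> y t) has_derivative (\<lambda>h. G y \<bullet> h)) (at y)"
    and dwxx: "((\<lambda>y. Dw y t) has_derivative (\<lambda>h. D2 *v h)) (at x)"
    and dG: "G differentiable (at x)"
    and cA: "isCont A x"
    and AG: "\<forall>y\<in>Om. A y *v G y = \<phi> (norm y) *\<^sub>R y"
    and x0: "x \<noteq> 0" and dphi: "(\<phi> has_real_derivative \<phi>') (at (norm x))"
    and tr: "\<And>H. (\<forall>h. h \<bullet> (H *v h) \<le> 0) \<Longrightarrow> (\<Sum>i\<in>UNIV. (A x *v (H *v axis i 1))$i) \<le> 0"
  shows "Lop A bv wt Dw x t \<ge> Pt - (\<phi>' * norm x + real CARD('n) * \<phi> (norm x)) - bv x \<bullet> (\<phi> (norm x) *\<^sub>R x)"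
proof -
  have "0 \<le> wt x t - Pt"
  proof (rule deriv_left_max[OF _ t])
    show "((\<lambda>s. w x s - \<Psi> x s) has_real_derivative wt x t - Pt) (at t within {0<..T})"
      using DERIV_diff[OF dwt has_field_derivative_at_within[OF dPt]] .
  qed (use mxt in auto)
  then have wtP: "Pt \<le> wt x t" by simp
  have "(\<lambda>h. Dw x t \<bullet> h - G x \<bullet> h) = (\<lambda>h. 0)"
  proof (rule differential_zero_maxmin[OF Om(2) Om(1)])
    show "((\<lambda>y. w y t - \<Psi> y t) has_derivative (\<lambda>h. Dw x t \<bullet> h - G x \<bullet> h)) (at x)"
      using has_derivative_diff[OF dwx[rule_format, OF Om(2)] dPx[rule_format, OF Om(2)]] .
  qed (use mxs in auto)
  then have "(Dw x t - G x) \<bullet> (Dw x t - G x) = 0" by (metis inner_diff_left)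
  then have grad: "Dw x t = G x" by simp
  define z where "z y = Dw y t - G y" for y
  obtain DG where DG: "(G has_derivative DG) (at x)" using dG unfolding differentiable_def by blast
  define Dz where "Dz h = D2 *v h - DG h" for h
  have dz: "(z has_derivative Dz) (at x)"
    unfolding z_def Dz_def by (rule has_derivative_diff[OF dwxx DG])
  have z0: "z x = 0" unfolding z_def grad by simp
  have linDz: "linear Dz" using dz by (rule has_derivative_linear)
  define H where "H = matrix Dz"
  have HDz: "H *v h = Dz h" for h unfolding H_def using matrix_works[OF linDz[folded linear_matrix_vector_mul_eq]] .
  obtain \<epsilon> where \<epsilon>: "\<epsilon> > 0" "ball x \<epsilon> \<subseteq> Om" using Om open_contains_ball by blast
  have neg: "h \<bullet> (H *v h) \<le> 0" for h
  proof (cases "h = 0")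
    case True then show ?thesis by simp
  next
    case False
    define \<delta> where "\<delta> = \<epsilon> / norm h"
    have \<delta>: "\<delta> > 0" using \<epsilon> False unfolding \<delta>_def by simp
    have inO: "x + s *\<^sub>R h \<in> Om" if "s \<in> {-\<delta><..<\<delta>}" for s
    proof -
      have "norm (s *\<^sub>R h) < \<epsilon>" using that False unfolding \<delta>_def by (auto simp: field_simps abs_less_iff)
      then show ?thesis using \<epsilon>(2) by (auto simp: dist_norm)
    qed
    have "Dz h \<bullet> h \<le> 0"
    proof (rule second_order_max[OF \<delta>, of "\<lambda>s. w (x + s *\<^sub>R h) t - \<Psi> (x + s *\<^sub>R h) t" "\<lambda>s. z (x + s *\<^sub>R h) \<bullet> h"])
      show "\<forall>s\<in>{- \<delta><..<\<delta>}. w (x + s *\<^sub>R h) t - \<Psi> (x + s *\<^sub>R h) t \<le> w (x + 0 *\<^sub>R h) t - \<Psi> (x + 0 *\<^sub>R h) t"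
        using mxs inO by simp
      show "\<forall>s\<in>{- \<delta><..<\<delta>}. ((\<lambda>s. w (x + s *\<^sub>R h) t - \<Psi> (x + s *\<^sub>R h) t) has_real_derivative z (x + s *\<^sub>R h) \<bullet> h) (at s)"
      proof
        fix s assume s: "s \<in> {- \<delta><..<\<delta>}"
        have "((\<lambda>y. w y t - \<Psi> y t) has_derivative (\<lambda>k. Dw (x + s *\<^sub>R h) t \<bullet> k - G (x + s *\<^sub>R h) \<bullet> k)) (at (x + s *\<^sub>R h))"
          using has_derivative_diff[OF dwx[rule_format, OF inO[OF s]] dPx[rule_format, OF inO[OF s]]] .
        from line_deriv[OF this] show "((\<lambda>s. w (x + s *\<^sub>R h) t - \<Psi> (x + s *\<^sub>R h) t) has_real_derivative z (x + s *\<^sub>R h) \<bullet> h) (at s)"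
          unfolding z_def by (simp add: inner_diff_left)
      qed
      show "z (x + 0 *\<^sub>R h) \<bullet> h = 0" using z0 by simp
      show "((\<lambda>s. z (x + s *\<^sub>R h) \<bullet> h) has_real_derivative Dz h \<bullet> h) (at 0)"
        by (rule line_inner_deriv[OF dz])
    qed
    then show ?thesis using HDz by (simp add: inner_commute)
  qed
  have trneg: "(\<Sum>i\<in>UNIV. (A x *v (H *v axis i 1))$i) \<le> 0" using tr neg by blast
  have pd: "pdx i (\<lambda>y. (A y *v Dw y t) $ i) x
      = (A x *v (H *v axis i 1))$i + (\<phi>' * (x$i / norm x) * x$i + \<phi> (norm x))" for i
  proof -
    have d1: "((\<lambda>s. (A (x + s *\<^sub>R axis i 1) *v z (x + s *\<^sub>R axis i 1)) $ i) has_real_derivative (A x *v Dz (axis i 1)) $ i) (at 0)"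
      by (rule deriv_Av_zero[OF cA z0 dz])
    have d2: "((\<lambda>s. \<phi> (norm (x + s *\<^sub>R axis i 1)) * (x + s *\<^sub>R axis i 1) $ i) has_real_derivative
           (\<phi>' * (x$i / norm x) * x$i + \<phi> (norm x))) (at 0)"
      by (rule radial_comp_deriv[OF x0 dphi])
    have ev: "eventually (\<lambda>s. (A (x + s *\<^sub>R axis i 1) *v Dw (x + s *\<^sub>R axis i 1) t) $ i =
        (A (x + s *\<^sub>R axis i 1) *v z (x + s *\<^sub>R axis i 1)) $ i + \<phi> (norm (x + s *\<^sub>R axis i 1)) * (x + s *\<^sub>R axis i 1) $ i) (nhds 0)"
    proof -
      have "open {s::real. x + s *\<^sub>R axis i 1 \<in> Om}"
      proof -
        have "open ((\<lambda>s::real. x + s *\<^sub>R axis i 1) -` Om)"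
          by (rule open_vimage[OF Om(1)]) (intro continuous_intros)
        then show ?thesis by (simp add: vimage_def)
      qed
      moreover have "(0::real) \<in> {s. x + s *\<^sub>R axis i 1 \<in> Om}" using Om by simp
      ultimately have "eventually (\<lambda>s. x + s *\<^sub>R axis i 1 \<in> Om) (nhds (0::real))"
        using eventually_nhds by blast
      then show ?thesis
      proof (rule eventually_mono)
        fix s assume "x + s *\<^sub>R axis i 1 \<in> Om"
        then have "A (x + s *\<^sub>R axis i 1) *v G (x + s *\<^sub>R axis i 1) = \<phi> (norm (x + s *\<^sub>R axis i 1)) *\<^sub>R (x + s *\<^sub>R axis i 1)"
          using AG by blast
        then show "(A (x + s *\<^sub>R axis i 1) *v Dw (x + s *\<^sub>R axis i 1) t) $ i =
          (A (x + s *\<^sub>R axis i 1) *v z (x + s *\<^sub>R axis i 1)) $ i + \<phi> (norm (x + s *\<^sub>R axis i 1)) * (x + s *\<^sub>R axis i 1) $ i"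
          unfolding z_def by (simp add: matrix_vector_mult_diff_distrib)
      qed
    qed
    have "((\<lambda>s. (A (x + s *\<^sub>R axis i 1) *v Dw (x + s *\<^sub>R axis i 1) t) $ i) has_real_derivative
        (A x *v Dz (axis i 1)) $ i + (\<phi>' * (x$i / norm x) * x$i + \<phi> (norm x))) (at 0)"
      using DERIV_add[OF d1 d2] by (subst DERIV_cong_ev[OF refl ev refl])
    then show ?thesis unfolding pdx_def HDz by (rule DERIV_imp_deriv)
  qed
  have sumx: "(\<Sum>i\<in>UNIV. \<phi>' * (x$i / norm x) * x$i) = \<phi>' * norm x"
  proof -
    have "(\<Sum>i\<in>UNIV. \<phi>' * (x$i / norm x) * x$i) = (\<phi>' / norm x) * (\<Sum>i\<in>UNIV. x$i * x$i)"
      by (simp add: sum_distrib_left mult_ac)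
    also have "\<dots> = (\<phi>' / norm x) * (norm x)^2" by (simp add: normsq_sum)
    also have "\<dots> = \<phi>' * norm x" using x0 by (simp add: power2_eq_square)
    finally show ?thesis .
  qed
  have div: "divg (\<lambda>y. A y *v Dw y t) x = (\<Sum>i\<in>UNIV. (A x *v (H *v axis i 1))$i) + (\<phi>' * norm x + real CARD('n) * \<phi> (norm x))"
    unfolding divg_def pd sum.distrib sumx by simp
  have bterm: "bv x \<bullet> (A x *v Dw x t) = bv x \<bullet> (\<phi> (norm x) *\<^sub>R x)"
    using AG Om grad by simp
  show ?thesis unfolding Lop_def div bterm using wtP trneg by simp
qed




lemma cont_bound:
  fixes f :: "real \<Rightarrow> real"
  assumes "continuous_on {a..b} f"
  shows "\<exists>B\<ge>0. \<forall>s\<in>{a..b}. \<bar>f s\<bar> \<le> B"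
proof -
  have "compact (f ` {a..b})" by (rule compact_continuous_image[OF assms compact_Icc])
  then obtain B where B: "\<forall>x\<in>f ` {a..b}. norm x \<le> B" using compact_imp_bounded bounded_iff by metis
  show ?thesis by (rule exI[of _ "max B 0"]) (use B in auto)
qed

lemma cont_posmin:
  fixes f :: "real \<Rightarrow> real"
  assumes c: "continuous_on {a..b} f" and ab: "a \<le> b" and p: "\<forall>s\<in>{a..b}. 0 < f s"
  shows "\<exists>m>0. \<forall>s\<in>{a..b}. m \<le> f s"
proof -
  obtain x where x: "x \<in> {a..b}" "\<forall>y\<in>{a..b}. f x \<le> f y"
    using continuous_attains_inf[OF compact_Icc _ c] ab by auto
  show ?thesis by (rule exI[of _ "f x"]) (use x p in auto)
qed

lemma radial_has_derivative:
  fixes y :: "real^'n" and \<psi> :: "real \<Rightarrow> real"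
  assumes y: "y \<noteq> 0" and d: "(\<psi> has_real_derivative d) (at (norm y))"
  shows "((\<lambda>y. \<psi> (norm y)) has_derivative (\<lambda>h. ((d / norm y) *\<^sub>R y) \<bullet> h)) (at y)"
proof -
  have dn: "(norm has_derivative (\<lambda>h. y \<bullet> h / norm y)) (at y)"
    using has_derivative_norm[OF y] by (simp add: sgn_div_norm inner_commute divide_inverse mult.commute)
  have d': "(\<psi> has_derivative (\<lambda>u. d * u)) (at (norm y))" using d by (simp add: has_field_derivative_def)
  have "((\<lambda>y. \<psi> (norm y)) has_derivative (\<lambda>h. d * (y \<bullet> h / norm y))) (at y)"
    using has_derivative_compose[OF dn d'] by (simp add: o_def)
  then show ?thesis by (simp add: inner_scaleR_left)
qed

lemma radial_scale_differentiable:
  fixes x :: "real^'n" and \<kappa> :: "real \<Rightarrow> real"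
  assumes x: "x \<noteq> 0" and d: "\<kappa> differentiable (at (norm x))"
  shows "(\<lambda>y. \<kappa> (norm y) *\<^sub>R y) differentiable (at x)"
proof -
  have "norm differentiable (at x)" using x by (rule differentiable_norm_at)
  then have "(\<kappa> \<circ> norm) differentiable (at x)" using d by (rule differentiable_chain_at)
  then have "(\<lambda>y. \<kappa> (norm y)) differentiable (at x)" by (simp add: o_def)
  then show ?thesis by (intro differentiable_scaleR) auto
qed

lemma Pm_cont: "continuous_on (-{0}) (Pm :: real^'n \<Rightarrow> real^'n^'n)"
  unfolding Pm_def by (intro continuous_intros) auto



theorem proposition5p7:
  fixes N1 N2 :: nat and a1 a2 \<alpha>1 \<alpha>2 :: "nat \<Rightarrow> real"
    and f1 f2 pcd Shat :: "real \<Rightarrow> real"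
    and r0 c1 c2 s0 sl su T :: real
    and w wt :: "real^'n \<Rightarrow> real \<Rightarrow> real"
    and Dw :: "real^'n \<Rightarrow> real \<Rightarrow> real^'n"
    and D2w :: "real^'n \<Rightarrow> real \<Rightarrow> real^'n^'n"
  defines "g1 \<equiv> gfun N1 a1 \<alpha>1" and "g2 \<equiv> gfun N2 a2 \<alpha>2"
    and "F1 \<equiv> Ffun pcd f1" and "F2 \<equiv> Ffun pcd f2"
    and "U \<equiv> {x::real^'n. r0 < norm x}"
  assumes dim: "CARD('n) \<ge> 2"
    and g1_adm: "g_admissible N1 a1 \<alpha>1" and g2_adm: "g_admissible N2 a2 \<alpha>2"
    and f1_cont: "continuous_on {0..1} f1" and f1_C1: "f1 C1_differentiable_on {0<..<1}"
    and f2_cont: "continuous_on {0..1} f2" and f2_C1: "f2 C1_differentiable_on {0<..<1}"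
    and f1_0: "f1 0 = 0" and f2_1: "f2 1 = 0"
    and f1_mono: "\<forall>s\<in>{0<..<1}. deriv f1 s > 0"
    and f2_mono: "\<forall>s\<in>{0<..<1}. deriv f2 s < 0"
    and pcd_C1: "pcd C1_differentiable_on {0<..<1}"
    and pcd_pos: "\<forall>s\<in>{0<..<1}. pcd s > 0"
    and r0_pos: "r0 > 0"
    and c_nz: "c1\<^sup>2 + c2\<^sup>2 > 0"
    and s0: "0 < s0" "s0 < 1"
    and Shat_ode: "\<forall>r\<ge>r0. (Shat has_real_derivative
        (Gsc g2 (c2 * r powr (1 - real CARD('n))) * F2 (Shat r)
         - Gsc g1 (c1 * r powr (1 - real CARD('n))) * F1 (Shat r))) (at r within {r0..})"
    and Shat_init: "Shat r0 = s0"
    and Shat_bounds: "0 < sl" "su < 1" "\<forall>r\<ge>r0. sl \<le> Shat r \<and> Shat r \<le> su"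
    and T_pos: "T > 0"
    and w_cont: "continuous_on ({x. r0 \<le> norm x} \<times> {0..T}) (\<lambda>(x, t). w x t)"
    and w_bdd: "\<exists>M. \<forall>x t. r0 \<le> norm x \<and> 0 \<le> t \<and> t \<le> T \<longrightarrow> \<bar>w x t\<bar> \<le> M"
    and w_t: "\<forall>x\<in>U. \<forall>t\<in>{0<..T}. ((\<lambda>s. w x s) has_real_derivative wt x t) (at t within {0<..T})"
    and w_x: "\<forall>x\<in>U. \<forall>t\<in>{0<..T}. ((\<lambda>y. w y t) has_derivative (\<lambda>h. Dw x t \<bullet> h)) (at x)"
    and w_xx: "\<forall>x\<in>U. \<forall>t\<in>{0<..T}. ((\<lambda>y. Dw y t) has_derivative (\<lambda>h. D2w x t *v h)) (at x)"
    and wt_cont: "continuous_on (U \<times> {0<..T}) (\<lambda>(x, t). wt x t)"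
    and Dw_cont: "continuous_on (U \<times> {0<..T}) (\<lambda>(x, t). Dw x t)"
    and D2w_cont: "continuous_on (U \<times> {0<..T}) (\<lambda>(x, t). D2w x t)"
    and w_init: "\<forall>x\<in>U. w x 0 \<le> 0"
    and Lw: "\<forall>x\<in>U. \<forall>t\<in>{0<..T}.
       Lop (Amat F1 F2 g1 g2 c1 c2 Shat) (bvec F1 F2 g1 g2 c1 c2 Shat) wt Dw x t \<le> 0"
  shows "Limsup at_top (\<lambda>r. ereal (Sup {w x t | x t. norm x = r \<and> 0 \<le> t \<and> t \<le> T})) \<le> 0"
proof -
  have g1e: "g1 = gfun N1 a1 \<alpha>1" and g2e: "g2 = gfun N2 a2 \<alpha>2"
    and F1e: "F1 = Ffun pcd f1" and F2e: "F2 = Ffun pcd f2" and Ue: "U = {x::real^'n. r0 < norm x}"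
    by (simp_all add: assms(1-5))
  define nn where "nn = real CARD('n)"
  have nn2: "nn \<ge> 2" using dim unfolding nn_def by simp
  have Sr: "Shat r \<in> {0<..<1}" "sl \<le> Shat r" "Shat r \<le> su" if "r \<ge> r0" for r
    using Shat_bounds that by fastforce+
  have slsu: "sl \<le> su" using Sr(2,3)[of r0] by simp
  have slsu01: "{sl..su} \<subseteq> {0<..<1}" using Shat_bounds by auto
  have Scont: "continuous_on {r0..} Shat"
    by (rule continuous_on_eq_continuous_within[THEN iffD2])
       (use Shat_ode DERIV_continuous in blast)
  have Sdiff: "(Shat has_real_derivative
        (Gsc g2 (c2 * r powr (1 - real CARD('n))) * F2 (Shat r)
         - Gsc g1 (c1 * r powr (1 - real CARD('n))) * F1 (Shat r))) (at r)" if "r > r0" for r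
  proof -
    have "(Shat has_real_derivative
        (Gsc g2 (c2 * r powr (1 - real CARD('n))) * F2 (Shat r)
         - Gsc g1 (c1 * r powr (1 - real CARD('n))) * F1 (Shat r))) (at r within {r0<..})"
      by (rule has_field_derivative_subset[OF Shat_ode[rule_format]]) (use that in auto)
    then show ?thesis using at_within_open[of r "{r0<..}"] that by simp
  qed
  have Sdiff': "Shat differentiable (at r)" if "r > r0" for r
    using Sdiff[OF that] real_differentiable_def by blast
  have f1p: "\<forall>s\<in>{0<..<1}. f1 s > 0" using pos_incr[OF f1_cont f1_C1 f1_0 f1_mono] by auto
  have f2p: "\<forall>s\<in>{0<..<1}. f2 s > 0" using pos_decr[OF f2_cont f2_C1 f2_1 f2_mono] by auto
  note FP1 = F_props[OF pcd_C1 f1_C1 pcd_pos f1p, folded F1e]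
  note FP2 = F_props[OF pcd_C1 f2_C1 pcd_pos f2p, folded F2e]
  obtain Fm1 where Fm1: "Fm1 > 0" "\<forall>s\<in>{sl..su}. Fm1 \<le> F1 s"
    using cont_posmin[OF continuous_on_subset[OF FP1(3) slsu01] slsu] FP1(1) slsu01 by blast
  obtain FM1 where FM1: "FM1 \<ge> 0" "\<forall>s\<in>{sl..su}. \<bar>F1 s\<bar> \<le> FM1"
    using cont_bound[OF continuous_on_subset[OF FP1(3) slsu01]] by blast
  obtain FM2 where FM2: "FM2 \<ge> 0" "\<forall>s\<in>{sl..su}. \<bar>F2 s\<bar> \<le> FM2"
    using cont_bound[OF continuous_on_subset[OF FP2(3) slsu01]] by blast
  obtain DM1 where DM1: "DM1 \<ge> 0" "\<forall>s\<in>{sl..su}. \<bar>deriv F1 s\<bar> \<le> DM1"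
    using cont_bound[OF continuous_on_subset[OF FP1(4) slsu01]] by blast
  obtain DM2 where DM2: "DM2 \<ge> 0" "\<forall>s\<in>{sl..su}. \<bar>deriv F2 s\<bar> \<le> DM2"
    using cont_bound[OF continuous_on_subset[OF FP2(4) slsu01]] by blast
  have F1S: "F1 (Shat r) > 0" "Fm1 \<le> F1 (Shat r)" "F1 (Shat r) \<le> FM1" "\<bar>deriv F1 (Shat r)\<bar> \<le> DM1"
    if "r \<ge> r0" for r
  proof -
    have "Shat r \<in> {sl..su}" "Shat r \<in> {0<..<1}" using Sr[OF that] by auto
    then show "F1 (Shat r) > 0" "Fm1 \<le> F1 (Shat r)" "F1 (Shat r) \<le> FM1" "\<bar>deriv F1 (Shat r)\<bar> \<le> DM1"
      using FP1(1) Fm1 FM1 DM1 abs_le_D1 by blast+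
  qed
  have F2S: "F2 (Shat r) > 0" "F2 (Shat r) \<le> FM2" "\<bar>deriv F2 (Shat r)\<bar> \<le> DM2"
    if "r \<ge> r0" for r
  proof -
    have "Shat r \<in> {sl..su}" "Shat r \<in> {0<..<1}" using Sr[OF that] by auto
    then show "F2 (Shat r) > 0" "F2 (Shat r) \<le> FM2" "\<bar>deriv F2 (Shat r)\<bar> \<le> DM2"
      using FP2(1) FM2 DM2 abs_le_D1 by blast+
  qed
  define sg where "sg c r = \<bar>c\<bar> * (r powr (- nn) * r)" for c r :: real
  have sg_pow: "r powr (- nn) * r = r powr (1 - nn)" if "r > 0" for r
  proof -
    have "r powr (1 - nn) = r powr (- nn + 1)" by simp
    also have "\<dots> = r powr (- nn) * r powr 1" by (rule powr_add)
    finally show ?thesis using that by simp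
  qed
  have sg_nn: "sg c r \<ge> 0" if "r \<ge> 0" for c r unfolding sg_def using that by simp
  have sg_le: "sg c r \<le> sg c r0" if "r \<ge> r0" for c r
  proof -
    have "r powr (1 - nn) \<le> r0 powr (1 - nn)"
      by (rule powr_mono2') (use nn2 r0_pos that in auto)
    then show ?thesis unfolding sg_def using sg_pow[of r] sg_pow[of r0] r0_pos that
      by (simp add: mult_left_mono)
  qed
  have sg_pos: "sg c r > 0" if "c \<noteq> 0" "r > 0" for c r unfolding sg_def using that by simp
  have sg_cont: "continuous_on {r0..} (sg c)" for c
    unfolding sg_def using r0_pos by (intro continuous_intros) auto
  have sg_deriv: "(sg c has_real_derivative \<bar>c\<bar> * ((1 - nn) * r powr (1 - nn - 1))) (at r)" if "r > 0" for c r
  proof -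
    have "((\<lambda>r. \<bar>c\<bar> * r powr (1 - nn)) has_real_derivative \<bar>c\<bar> * ((1 - nn) * r powr (1 - nn - 1))) (at r)"
      by (rule DERIV_cmult, rule has_real_derivative_powr[OF that])
    moreover have "eventually (\<lambda>r. sg c r = \<bar>c\<bar> * r powr (1 - nn)) (nhds r)"
    proof -
      have "eventually (\<lambda>r. r \<in> {0<..}) (nhds r)" using that by (intro eventually_nhds_in_open) auto
      then show ?thesis by eventually_elim (simp add: sg_def sg_pow)
    qed
    ultimately show ?thesis by (subst DERIV_cong_ev[OF refl _ refl]) auto
  qed
  have gc1: "continuous_on {0..} g1" and gc2: "continuous_on {0..} g2"
    unfolding g1e g2e by (rule gfun_cont[OF g1_adm], rule gfun_cont[OF g2_adm])
  have hc1: "continuous_on {0..} (hfun N1 a1 \<alpha>1)" and hc2: "continuous_on {0..} (hfun N2 a2 \<alpha>2)"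
    by (rule hfun_cont[OF g1_adm], rule hfun_cont[OF g2_adm])
  have subs: "{0..sg c r0} \<subseteq> {0..}" for c by auto
  obtain gM1 where gM1: "gM1 \<ge> 0" "\<forall>s\<in>{0..sg c1 r0}. \<bar>g1 s\<bar> \<le> gM1"
    using cont_bound[OF continuous_on_subset[OF gc1 subs]] by blast
  obtain gM2 where gM2: "gM2 \<ge> 0" "\<forall>s\<in>{0..sg c2 r0}. \<bar>g2 s\<bar> \<le> gM2"
    using cont_bound[OF continuous_on_subset[OF gc2 subs]] by blast
  obtain hM1 where hM1: "hM1 \<ge> 0" "\<forall>s\<in>{0..sg c1 r0}. \<bar>hfun N1 a1 \<alpha>1 s\<bar> \<le> hM1"
    using cont_bound[OF continuous_on_subset[OF hc1 subs]] by blast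
  obtain hM2 where hM2: "hM2 \<ge> 0" "\<forall>s\<in>{0..sg c2 r0}. \<bar>hfun N2 a2 \<alpha>2 s\<bar> \<le> hM2"
    using cont_bound[OF continuous_on_subset[OF hc2 subs]] by blast
  have a10: "a1 0 > 0" and a20: "a2 0 > 0" using g1_adm g2_adm unfolding g_admissible_def by auto
  have sgI: "sg c r \<in> {0..sg c r0}" if "r \<ge> r0" for c r using sg_nn[of r c] sg_le[OF that] r0_pos that by auto
  have g1r: "a1 0 \<le> g1 (sg c1 r)" "g1 (sg c1 r) \<le> gM1" if "r \<ge> r0" for r
  proof -
    have r0': "r \<ge> 0" using that r0_pos by simp
    show "a1 0 \<le> g1 (sg c1 r)" unfolding g1e using gfun_ge[OF g1_adm sg_nn[OF r0']] .
    show "g1 (sg c1 r) \<le> gM1" using gM1(2) sgI[OF that] abs_le_D1 by blast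
  qed
  have g2r: "a2 0 \<le> g2 (sg c2 r)" "g2 (sg c2 r) \<le> gM2" if "r \<ge> r0" for r
  proof -
    have r0': "r \<ge> 0" using that r0_pos by simp
    show "a2 0 \<le> g2 (sg c2 r)" unfolding g2e using gfun_ge[OF g2_adm sg_nn[OF r0']] .
    show "g2 (sg c2 r) \<le> gM2" using gM2(2) sgI[OF that] abs_le_D1 by blast
  qed
  have h1r: "a1 0 \<le> hfun N1 a1 \<alpha>1 (sg c1 r)" "hfun N1 a1 \<alpha>1 (sg c1 r) \<le> hM1" if "r \<ge> r0" for r
  proof -
    have r0': "r \<ge> 0" using that r0_pos by simp
    show "a1 0 \<le> hfun N1 a1 \<alpha>1 (sg c1 r)" using hfun_ge[OF g1_adm sg_nn[OF r0']] .
    show "hfun N1 a1 \<alpha>1 (sg c1 r) \<le> hM1" using hM1(2) sgI[OF that] abs_le_D1 by blast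
  qed
  have h2r: "a2 0 \<le> hfun N2 a2 \<alpha>2 (sg c2 r)" "hfun N2 a2 \<alpha>2 (sg c2 r) \<le> hM2" if "r \<ge> r0" for r
  proof -
    have r0': "r \<ge> 0" using that r0_pos by simp
    show "a2 0 \<le> hfun N2 a2 \<alpha>2 (sg c2 r)" using hfun_ge[OF g2_adm sg_nn[OF r0']] .
    show "hfun N2 a2 \<alpha>2 (sg c2 r) \<le> hM2" using hM2(2) sgI[OF that] abs_le_D1 by blast
  qed
  define pf where "pf r = F1 (Shat r) * g1 (sg c1 r) + F2 (Shat r) * g2 (sg c2 r)" for r
  define qf where "qf r = F1 (Shat r) * (deriv g1 (sg c1 r) * sg c1 r) + F2 (Shat r) * (deriv g2 (sg c2 r) * sg c2 r)" for r
  define mf where "mf r = F1 (Shat r) * hfun N1 a1 \<alpha>1 (sg c1 r) + F2 (Shat r) * hfun N2 a2 \<alpha>2 (sg c2 r)" for r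
  have mpq: "mf r = pf r + qf r" if "r \<ge> r0" for r
  proof -
    have "hfun N1 a1 \<alpha>1 (sg c1 r) = g1 (sg c1 r) + deriv g1 (sg c1 r) * sg c1 r"
      unfolding g1e using g_plus_deriv[OF g1_adm sg_nn] that r0_pos by simp
    moreover have "hfun N2 a2 \<alpha>2 (sg c2 r) = g2 (sg c2 r) + deriv g2 (sg c2 r) * sg c2 r"
      unfolding g2e using g_plus_deriv[OF g2_adm sg_nn] that r0_pos by simp
    ultimately show ?thesis unfolding mf_def pf_def qf_def by (simp add: algebra_simps)
  qed
  have pf_pos: "pf r > 0" if "r \<ge> r0" for r
  proof -
    have "0 < F1 (Shat r) * g1 (sg c1 r)" using F1S(1)[OF that] g1r(1)[OF that] a10 by simp
    moreover have "0 \<le> F2 (Shat r) * g2 (sg c2 r)" using F2S(1)[OF that] g2r(1)[OF that] a20 by simp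
    ultimately show ?thesis unfolding pf_def by simp
  qed
  define mlo where "mlo = Fm1 * a1 0"
  define mhi where "mhi = FM1 * hM1 + FM2 * hM2"
  have mlo_pos: "mlo > 0" unfolding mlo_def using Fm1 a10 by simp
  have mf_lo: "mlo \<le> mf r" if "r \<ge> r0" for r
  proof -
    have "Fm1 * a1 0 \<le> F1 (Shat r) * hfun N1 a1 \<alpha>1 (sg c1 r)"
      using F1S[OF that] h1r[OF that] Fm1 a10 by (intro mult_mono) auto
    moreover have "0 \<le> F2 (Shat r) * hfun N2 a2 \<alpha>2 (sg c2 r)" using F2S(1)[OF that] h2r(1)[OF that] a20 by simp
    ultimately show ?thesis unfolding mf_def mlo_def by simp
  qed
  have mf_hi: "mf r \<le> mhi" if "r \<ge> r0" for r
  proof -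
    have "F1 (Shat r) * hfun N1 a1 \<alpha>1 (sg c1 r) \<le> FM1 * hM1"
      using F1S[OF that] h1r[OF that] a10 by (intro mult_mono) auto
    moreover have "F2 (Shat r) * hfun N2 a2 \<alpha>2 (sg c2 r) \<le> FM2 * hM2"
      using F2S[OF that] h2r[OF that] a20 by (intro mult_mono) auto
    ultimately show ?thesis unfolding mf_def mhi_def by simp
  qed
  have mf_pos: "mf r > 0" if "r \<ge> r0" for r using mf_lo[OF that] mlo_pos by simp
  have mhi_nn: "mhi \<ge> 0" using mf_hi[of r0] mf_pos[of r0] by simp
  have sgn: "\<bar>c\<bar> * (norm y powr (- real CARD('n)) * norm y) = sg c (norm y)" for c and y :: "real^'n"
    unfolding sg_def nn_def ..
  have Bform: "Bmat F1 F2 g1 g2 c1 c2 Shat y = pf (norm y) *\<^sub>R mat 1 + qf (norm y) *\<^sub>R Pm y"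
    if "y \<noteq> 0" for y :: "real^'n"
    unfolding Bmat_def GJac_ustar[OF that] sgn pf_def qf_def
    by (simp add: scaleR_add_right scaleR_add_left algebra_simps)
  have Aform: "Amat F1 F2 g1 g2 c1 c2 Shat y = (1 / pf (norm y)) *\<^sub>R mat 1 + (1 / mf (norm y) - 1 / pf (norm y)) *\<^sub>R Pm y"
    if "norm y \<ge> r0" for y :: "real^'n"
  proof -
    have y0: "y \<noteq> 0" using that r0_pos by auto
    show ?thesis unfolding Amat_def Bform[OF y0] mpq[OF that]
      by (rule matrix_inv_PI[OF y0]) (use pf_pos[OF that] mf_pos[OF that] mpq[OF that] in auto)
  qed
  have Ay: "Amat F1 F2 g1 g2 c1 c2 Shat y *v (k *\<^sub>R y) = (k / mf (norm y)) *\<^sub>R y"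
    if "norm y \<ge> r0" for y :: "real^'n" and k
  proof -
    have y0: "y \<noteq> 0" using that r0_pos by auto
    have "Amat F1 F2 g1 g2 c1 c2 Shat y *v y = (1 / mf (norm y)) *\<^sub>R y"
      unfolding Aform[OF that] matrix_vector_mult_add_rdistrib scaleR_matrix_vector_assoc[symmetric]
        matrix_vector_mul_lid Pm_vec[OF y0]
      by (simp add: algebra_simps)
    then show ?thesis by (simp add: matrix_vector_mult_scaleR)
  qed
  define \<beta>0 where "\<beta>0 = DM2 * (gM2 * sg c2 r0) + DM1 * (gM1 * sg c1 r0)"
  have \<beta>0_nn: "\<beta>0 \<ge> 0" unfolding \<beta>0_def using DM1 DM2 gM1 gM2 sg_nn r0_pos by simp
  have bbound: "norm (bvec F1 F2 g1 g2 c1 c2 Shat y) \<le> \<beta>0" if "norm y \<ge> r0" for y :: "real^'n"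
  proof -
    have nG: "norm (Gvec g (ustar c y)) = \<bar>g (sg c (norm y))\<bar> * sg c (norm y)" for g c
    proof -
      have un: "norm (ustar c y) = sg c (norm y)" using ustar_norm[of c y] sgn[of c y] by simp
      show ?thesis unfolding Gvec_def norm_scaleR un using sg_nn[of "norm y" c] by simp
    qed
    have n1: "norm (deriv F1 (Shat (norm y)) *\<^sub>R Gvec g1 (ustar c1 y)) \<le> DM1 * (gM1 * sg c1 r0)"
      unfolding norm_scaleR nG
      using F1S(4)[OF that] g1r[OF that] a10 sg_nn[of "norm y" c1] sg_le[OF that, of c1] gM1 DM1
      by (intro mult_mono) (auto intro: mult_mono)
    have n2: "norm (deriv F2 (Shat (norm y)) *\<^sub>R Gvec g2 (ustar c2 y)) \<le> DM2 * (gM2 * sg c2 r0)"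
      unfolding norm_scaleR nG
      using F2S(3)[OF that] g2r[OF that] a20 sg_nn[of "norm y" c2] sg_le[OF that, of c2] gM2 DM2
      by (intro mult_mono) (auto intro: mult_mono)
    show ?thesis unfolding bvec_def \<beta>0_def using norm_triangle_ineq4 n1 n2
      by (smt (verit))
  qed
  have FS1c: "continuous_on {r0..} (\<lambda>r. F1 (Shat r))"
    by (rule continuous_on_compose2[OF FP1(3) Scont]) (use Sr in auto)
  have FS2c: "continuous_on {r0..} (\<lambda>r. F2 (Shat r))"
    by (rule continuous_on_compose2[OF FP2(3) Scont]) (use Sr in auto)
  have sgimg: "sg c ` {r0..} \<subseteq> {0..}" for c using sg_nn r0_pos by auto
  have gs1c: "continuous_on {r0..} (\<lambda>r. g1 (sg c1 r))" by (rule continuous_on_compose2[OF gc1 sg_cont sgimg])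
  have gs2c: "continuous_on {r0..} (\<lambda>r. g2 (sg c2 r))" by (rule continuous_on_compose2[OF gc2 sg_cont sgimg])
  have hs1c: "continuous_on {r0..} (\<lambda>r. hfun N1 a1 \<alpha>1 (sg c1 r))" by (rule continuous_on_compose2[OF hc1 sg_cont sgimg])
  have hs2c: "continuous_on {r0..} (\<lambda>r. hfun N2 a2 \<alpha>2 (sg c2 r))" by (rule continuous_on_compose2[OF hc2 sg_cont sgimg])
  have pf_cont: "continuous_on {r0..} pf" unfolding pf_def
    using FS1c FS2c gs1c gs2c by (intro continuous_intros)
  have mf_cont: "continuous_on {r0..} mf" unfolding mf_def
    using FS1c FS2c hs1c hs2c by (intro continuous_intros)
  define Af where "Af y = (1 / pf (norm y)) *\<^sub>R mat 1 + (1 / mf (norm y) - 1 / pf (norm y)) *\<^sub>R Pm y" for y :: "real^'n"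
  have openU: "open {y::real^'n. r0 < norm y}" by (intro open_Collect_less continuous_intros)
  have Af_cont: "continuous_on {y::real^'n. r0 < norm y} Af"
  proof -
    have nimg: "norm ` {y::real^'n. r0 < norm y} \<subseteq> {r0..}" by auto
    have pn: "continuous_on {y::real^'n. r0 < norm y} (\<lambda>y. pf (norm y))"
      by (rule continuous_on_compose2[OF pf_cont _ nimg]) (intro continuous_intros)
    have mn: "continuous_on {y::real^'n. r0 < norm y} (\<lambda>y. mf (norm y))"
      by (rule continuous_on_compose2[OF mf_cont _ nimg]) (intro continuous_intros)
    have Pc: "continuous_on {y::real^'n. r0 < norm y} Pm"
      by (rule continuous_on_subset[OF Pm_cont]) (use r0_pos in auto)
    have nz: "\<forall>y\<in>{y::real^'n. r0 < norm y}. pf (norm y) \<noteq> 0 \<and> mf (norm y) \<noteq> 0"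
      using pf_pos mf_pos by (metis less_imp_le less_irrefl mem_Collect_eq)
    show ?thesis unfolding Af_def using pn mn Pc nz
      by (intro continuous_intros) auto
  qed
  have A_cont: "isCont (Amat F1 F2 g1 g2 c1 c2 Shat) x" if "r0 < norm x" for x :: "real^'n"
  proof -
    have "isCont Af x"
      using Af_cont openU that continuous_on_eq_continuous_at by blast
    moreover have "eventually (\<lambda>y. Amat F1 F2 g1 g2 c1 c2 Shat y = Af y) (nhds x)"
    proof -
      have "eventually (\<lambda>y. y \<in> {y::real^'n. r0 < norm y}) (nhds x)"
        using openU that by (intro eventually_nhds_in_open) auto
      then show ?thesis by eventually_elim (simp add: Aform Af_def)
    qed
    ultimately show ?thesis using isCont_cong by blast
  qed
  have hsg: "\<exists>d. ((\<lambda>r. hfun N a \<alpha> (sg c r)) has_real_derivative d) (at r)" if rpos: "r > 0" for N a \<alpha> c r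
  proof (cases "c = 0")
    case True
    then have "(\<lambda>r. hfun N a \<alpha> (sg c r)) = (\<lambda>r. hfun N a \<alpha> 0)" by (simp add: sg_def fun_eq_iff)
    then show ?thesis by (metis DERIV_const)
  next
    case False
    obtain dh where dh: "(hfun N a \<alpha> has_real_derivative dh) (at (sg c r))"
      using hfun_diff[OF sg_pos[OF False rpos]] real_differentiable_def by blast
    show ?thesis using DERIV_chain2[OF dh sg_deriv[OF rpos]] by blast
  qed
  have FSd: "\<exists>d. ((\<lambda>r. F (Shat r)) has_real_derivative d) (at r)"
    if rr: "r > r0" "\<forall>s\<in>{0<..<1}. (F has_real_derivative deriv F s) (at s)" for F r
  proof -
    obtain dS where "(Shat has_real_derivative dS) (at r)" using Sdiff'[OF rr(1)] real_differentiable_def by blast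
    moreover have "(F has_real_derivative deriv F (Shat r)) (at (Shat r))" using rr Sr[of r] by auto
    ultimately show ?thesis using DERIV_chain2 by blast
  qed
  have mf_diff: "\<exists>d. (mf has_real_derivative d) (at r)" if rr: "r > r0" for r
  proof -
    have r0': "r > 0" using rr r0_pos by simp
    obtain d1 where d1: "((\<lambda>r. F1 (Shat r)) has_real_derivative d1) (at r)" using FSd[OF rr FP1(2)] by blast
    obtain d2 where d2: "((\<lambda>r. F2 (Shat r)) has_real_derivative d2) (at r)" using FSd[OF rr FP2(2)] by blast
    obtain e1 where e1: "((\<lambda>r. hfun N1 a1 \<alpha>1 (sg c1 r)) has_real_derivative e1) (at r)" using hsg[OF r0'] by blast
    obtain e2 where e2: "((\<lambda>r. hfun N2 a2 \<alpha>2 (sg c2 r)) has_real_derivative e2) (at r)" using hsg[OF r0'] by blast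
    show ?thesis unfolding mf_def using DERIV_add[OF DERIV_mult[OF d1 e1] DERIV_mult[OF d2 e2]] by blast
  qed
  define Lam where "Lam r = integral {r0..r} mf" for r
  have Lam_deriv: "(Lam has_real_derivative mf r) (at r)" if "r > r0" for r
  proof -
    have c: "continuous_on {r0..r+1} mf" by (rule continuous_on_subset[OF mf_cont]) auto
    have "(Lam has_vector_derivative mf r) (at r within {r0..r+1})"
      unfolding Lam_def by (rule integral_has_vector_derivative[OF c]) (use that in auto)
    moreover have "at r within {r0..r+1} = at r" by (rule at_within_interior) (use that in auto)
    ultimately show ?thesis by (simp add: has_real_derivative_iff_has_vector_derivative)
  qed
  have Lam_cont: "continuous_on {r0..R} Lam" for R
  proof -
    have c: "continuous_on {r0..R} mf" by (rule continuous_on_subset[OF mf_cont]) auto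
    show ?thesis unfolding Lam_def by (rule indefinite_integral_continuous_1[OF integrable_continuous_real[OF c]])
  qed
  have Lam0: "Lam r0 = 0" unfolding Lam_def by simp
  have Lam_lo: "mlo * (r - r0) \<le> Lam r" if "r \<ge> r0" for r
  proof (cases "r = r0")
    case True then show ?thesis using Lam0 by simp
  next
    case False then have rr: "r0 < r" using that by simp
    obtain l z where lz: "r0 < z" "z < r" "(Lam has_real_derivative l) (at z)" "Lam r - Lam r0 = (r - r0) * l"
      using MVT[OF rr Lam_cont] Lam_deriv real_differentiable_def by (metis less_trans)
    have "l = mf z" using DERIV_unique[OF lz(3) Lam_deriv[OF lz(1)]] .
    then have "l \<ge> mlo" using mf_lo[of z] lz by simp
    then show ?thesis using lz(4) Lam0 rr by (simp add: mult_right_mono mult.commute)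
  qed
  have Lam_nn: "Lam r \<ge> 0" if "r \<ge> r0" for r using Lam_lo[OF that] mlo_pos that by (smt (verit) mult_nonneg_nonneg)
  obtain M0 where M0: "\<forall>x t. r0 \<le> norm x \<and> 0 \<le> t \<and> t \<le> T \<longrightarrow> \<bar>w x t\<bar> \<le> M0" using w_bdd by blast
  define M where "M = \<bar>M0\<bar> + 1"
  have Mpos: "M > 0" unfolding M_def by simp
  have wM: "w y s \<le> M" if "r0 \<le> norm y" "0 \<le> s" "s \<le> T" for y s
    using M0 that unfolding M_def by (meson abs_ge_self abs_le_D1 add_increasing2 order_trans zero_le_one)
  define K where "K = mhi + \<beta>0 + 1"
  define C where "C = (nn - 1) / r0 + \<beta>0 + 1"
  have Kpos: "K > 0" unfolding K_def using mhi_nn \<beta>0_nn by simp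
  have C1: "(nn - 1) / r0 \<ge> 0" using nn2 r0_pos by simp
  have Cpos: "C > 0" unfolding C_def using C1 \<beta>0_nn by simp
  define Psi where "Psi R y t = M * exp (K * t - Lam (norm y)) + M * (Lam (norm y) + C * t) / Lam R"
    for R and y :: "real^'n" and t
  have comp: "w y s \<le> Psi R y s" if R: "R > r0" and y: "r0 \<le> norm y" "norm y \<le> R" and s: "0 \<le> s" "s \<le> T" for R y s
  proof -
    define L where "L = Lam R"
    have Lpos: "L > 0" unfolding L_def using Lam_lo[of R] R mlo_pos by (smt (verit) mult_pos_pos)
    define Ks where "Ks = {y::real^'n. r0 \<le> norm y \<and> norm y \<le> R} \<times> {0..T}"
    define v where "v z = w (fst z) (snd z) - Psi R (fst z) (snd z)" for z :: "(real^'n) \<times> real"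
    have cK: "compact Ks"
    proof -
      have "compact {y::real^'n. r0 \<le> norm y \<and> norm y \<le> R}"
      proof (rule compact_eq_bounded_closed[THEN iffD2], rule conjI)
        show "bounded {y::real^'n. r0 \<le> norm y \<and> norm y \<le> R}"
          by (rule bounded_subset[OF bounded_cball[of 0 R]]) auto
        show "closed {y::real^'n. r0 \<le> norm y \<and> norm y \<le> R}"
          by (intro closed_Collect_conj closed_Collect_le continuous_intros)
      qed
      then show ?thesis unfolding Ks_def by (intro compact_Times compact_Icc)
    qed
    have neK: "Ks \<noteq> {}" using y s unfolding Ks_def by auto
    have cv: "continuous_on Ks v"
    proof -
      have sub: "Ks \<subseteq> {x. r0 \<le> norm x} \<times> {0..T}" unfolding Ks_def by auto
      have cw: "continuous_on Ks (\<lambda>z. w (fst z) (snd z))"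
        using continuous_on_subset[OF w_cont sub] by (simp add: case_prod_unfold)
      have cL: "continuous_on Ks (\<lambda>z. Lam (norm (fst z)))"
        by (rule continuous_on_compose2[OF Lam_cont[of R]]) (auto intro!: continuous_intros simp: Ks_def)
      show ?thesis unfolding v_def Psi_def using cw cL Lpos
        by (intro continuous_intros) (auto simp: L_def)
    qed
    obtain z0 where z0: "z0 \<in> Ks" "\<forall>z\<in>Ks. v z \<le> v z0"
      using continuous_attains_sup[OF cK neK cv] by blast
    have Psi_nn: "Psi R y' s' \<ge> 0" if "r0 \<le> norm y'" "0 \<le> s'" for y' s'
      unfolding Psi_def using Mpos Cpos Lpos Lam_nn[OF that(1)] that(2) L_def
      by (intro add_nonneg_nonneg divide_nonneg_pos mult_nonneg_nonneg) auto
    have Psi_in: "Psi R y' s' \<ge> M" if "norm y' = r0" "0 \<le> s'" for y' s'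
    proof -
      have "1 \<le> exp (K * s' - Lam (norm y'))" using that Lam0 Kpos by simp
      then have "M \<le> M * exp (K * s' - Lam (norm y'))" using Mpos by simp
      moreover have "0 \<le> M * (Lam (norm y') + C * s') / Lam R"
        using Mpos Cpos Lpos Lam0 that L_def by simp
      ultimately show ?thesis unfolding Psi_def by simp
    qed
    have Psi_out: "Psi R y' s' \<ge> M" if "norm y' = R" "0 \<le> s'" for y' s'
    proof -
      have "M * (Lam (norm y') + C * s') / Lam R = M + M * C * s' / L" using that Lpos L_def by (simp add: field_simps)
      moreover have "M * C * s' / L \<ge> 0" using Mpos Cpos Lpos that by simp
      moreover have "M * exp (K * s' - Lam (norm y')) \<ge> 0" using Mpos by simp
      ultimately show ?thesis unfolding Psi_def by simp
    qed
    have "v z0 \<le> 0"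
    proof (rule ccontr)
      assume "\<not> v z0 \<le> 0" then have vpos: "v z0 > 0" by simp
      obtain x t where xt: "z0 = (x, t)" by fastforce
      have xK: "r0 \<le> norm x" "norm x \<le> R" "0 \<le> t" "t \<le> T" using z0(1) xt unfolding Ks_def by auto
      have vx: "v z0 = w x t - Psi R x t" unfolding v_def xt by simp
      have nx1: "norm x \<noteq> r0" using vpos vx Psi_in[of x t] wM[of x t] xK by auto
      have nx2: "norm x \<noteq> R" using vpos vx Psi_out[of x t] wM[of x t] xK by auto
      have t0: "t \<noteq> 0"
      proof
        assume "t = 0"
        then have "w x t \<le> 0" using w_init Ue xK nx1 by auto
        then show False using vpos vx Psi_nn[of x t] xK by simp
      qed
      have xr: "r0 < norm x" "norm x < R" and tp: "0 < t" using xK nx1 nx2 t0 by auto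
      have xU: "x \<in> U" using xr Ue by simp
      have tT: "t \<in> {0<..T}" using tp xK by simp
      have x0: "x \<noteq> 0" using xr r0_pos by auto
      define Om where "Om = {y::real^'n. r0 < norm y \<and> norm y < R}"
      have openOm: "open Om" unfolding Om_def by (intro open_Collect_conj open_Collect_less continuous_intros)
      have xOm: "x \<in> Om" unfolding Om_def using xr by simp
      have OmK: "(y', t') \<in> Ks" if "y' \<in> Om" "0 \<le> t'" "t' \<le> T" for y' t' using that unfolding Om_def Ks_def by auto
      have OmU: "y' \<in> U" "r0 \<le> norm y'" if "y' \<in> Om" for y' using that unfolding Om_def Ue by auto
      define E where "E \<rho> = M * exp (K * t - Lam \<rho>)" for \<rho>
      define Q where "Q \<rho> = - E \<rho> + M / L" for \<rho>
      define G where "G y = (Q (norm y) * mf (norm y) / norm y) *\<^sub>R y" for y :: "real^'n"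
      define \<phi> where "\<phi> \<rho> = Q \<rho> / \<rho>" for \<rho>
      define r where "r = norm x"
      define \<phi>' where "\<phi>' = E r * mf r / r - Q r / r^2"
      define Pt where "Pt = E r * K + M * C / L"
      have rpos: "r > r0" using xr r_def by simp
      have r0'': "r > 0" using rpos r0_pos by simp
      have dE: "(E has_real_derivative - E \<rho> * mf \<rho>) (at \<rho>)" if "\<rho> > r0" for \<rho>
      proof -
        have "((\<lambda>\<rho>. K * t - Lam \<rho>) has_real_derivative 0 - mf \<rho>) (at \<rho>)"
          by (intro DERIV_diff DERIV_const Lam_deriv that)
        from DERIV_cmult[OF DERIV_chain2[OF DERIV_exp this], of M]
        show ?thesis unfolding E_def by (simp add: mult.assoc)
      qed
      have dQ: "(Q has_real_derivative E \<rho> * mf \<rho>) (at \<rho>)" if "\<rho> > r0" for \<rho>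
        unfolding Q_def using DERIV_add[OF DERIV_minus[OF dE[OF that]] DERIV_const[of "M/L"]] by simp
      have dpsi: "((\<lambda>\<rho>. M * exp (K * t - Lam \<rho>) + M * (Lam \<rho> + C * t) / Lam R) has_real_derivative Q \<rho> * mf \<rho>) (at \<rho>)"
        if "\<rho> > r0" for \<rho>
      proof -
        have "((\<lambda>\<rho>. M * (Lam \<rho> + C * t) / L) has_real_derivative M * (mf \<rho> + 0) / L) (at \<rho>)"
          by (intro DERIV_cdivide DERIV_cmult DERIV_add Lam_deriv that DERIV_const)
        from DERIV_add[OF dE[OF that] this]
        show ?thesis unfolding E_def[symmetric] L_def[symmetric] Q_def by (simp add: algebra_simps)
      qed
      have core_res: "Lop (Amat F1 F2 g1 g2 c1 c2 Shat) (bvec F1 F2 g1 g2 c1 c2 Shat) wt Dw x t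
          \<ge> Pt - (\<phi>' * norm x + real CARD('n) * \<phi> (norm x)) - bvec F1 F2 g1 g2 c1 c2 Shat x \<bullet> (\<phi> (norm x) *\<^sub>R x)"
      proof (rule core[OF openOm xOm tp xK(4)])
        show "\<forall>y\<in>Om. w y t - Psi R y t \<le> w x t - Psi R x t"
          using z0(2) OmK xK xt unfolding v_def by fastforce
        show "\<forall>s\<in>{0<..<t}. w x s - Psi R x s \<le> w x t - Psi R x t"
        proof
          fix s assume "s \<in> {0<..<t}"
          then have "(x, s) \<in> Ks" using xK unfolding Ks_def by auto
          then show "w x s - Psi R x s \<le> w x t - Psi R x t" using z0(2) xt unfolding v_def by fastforce
        qed
        show "((\<lambda>s. w x s) has_real_derivative wt x t) (at t within {0<..T})"
          using w_t xU tT by simp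
        show "((\<lambda>s. Psi R x s) has_real_derivative Pt) (at t)"
        proof -
          have "((\<lambda>s. M * exp (K * s - Lam r) + M * (Lam r + C * s) / L) has_real_derivative
              M * (exp (K * t - Lam r) * (K * 1 - 0)) + M * (0 + C * 1) / L) (at t)"
            by (intro DERIV_add DERIV_cmult DERIV_cdivide DERIV_chain2[OF DERIV_exp] DERIV_diff DERIV_const DERIV_ident)
          then show ?thesis unfolding Psi_def Pt_def E_def r_def L_def by (simp add: algebra_simps)
        qed
        show "\<forall>y\<in>Om. ((\<lambda>y. w y t) has_derivative (\<lambda>h. Dw y t \<bullet> h)) (at y)"
          using w_x OmU tT by auto
        show "\<forall>y\<in>Om. ((\<lambda>y. Psi R y t) has_derivative (\<lambda>h. G y \<bullet> h)) (at y)"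
        proof
          fix y assume yO: "y \<in> Om"
          have y0: "y \<noteq> 0" and yr: "norm y > r0" using yO r0_pos unfolding Om_def by auto
          from radial_has_derivative[OF y0 dpsi[OF yr]]
          show "((\<lambda>y. Psi R y t) has_derivative (\<lambda>h. G y \<bullet> h)) (at y)"
            unfolding Psi_def G_def by simp
        qed
        show "((\<lambda>y. Dw y t) has_derivative (\<lambda>h. D2w x t *v h)) (at x)"
          using w_xx xU tT by auto
        show "G differentiable (at x)"
        proof -
          obtain dm where dm: "(mf has_real_derivative dm) (at (norm x))" using mf_diff xr by blast
          have "((\<lambda>\<rho>. Q \<rho> * mf \<rho> / \<rho>) has_real_derivative
               ((E (norm x) * mf (norm x) * mf (norm x) + dm * Q (norm x)) * norm x - Q (norm x) * mf (norm x) * 1) / (norm x * norm x)) (at (norm x))"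
            by (rule DERIV_divide[OF DERIV_mult[OF dQ[OF xr(1)] dm] DERIV_ident]) (use x0 in simp)
          then have "(\<lambda>\<rho>. Q \<rho> * mf \<rho> / \<rho>) differentiable (at (norm x))"
            using real_differentiable_def by blast
          from radial_scale_differentiable[OF x0 this] show ?thesis unfolding G_def .
        qed
        show "isCont (Amat F1 F2 g1 g2 c1 c2 Shat) x" by (rule A_cont[OF xr(1)])
        show "\<forall>y\<in>Om. Amat F1 F2 g1 g2 c1 c2 Shat y *v G y = \<phi> (norm y) *\<^sub>R y"
        proof
          fix y assume yO: "y \<in> Om"
          then have yr: "norm y \<ge> r0" using OmU by blast
          have "mf (norm y) \<noteq> 0" using mf_pos[OF yr] by simp
          then show "Amat F1 F2 g1 g2 c1 c2 Shat y *v G y = \<phi> (norm y) *\<^sub>R y"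
            unfolding G_def Ay[OF yr] \<phi>_def by simp
        qed
        show "x \<noteq> 0" by (rule x0)
        show "(\<phi> has_real_derivative \<phi>') (at (norm x))"
        proof -
          have "(\<phi> has_real_derivative (E r * mf r * r - Q r * 1) / (r * r)) (at r)"
            unfolding \<phi>_def by (rule DERIV_divide[OF dQ[OF rpos] DERIV_ident]) (use r0'' in simp)
          moreover have "(E r * mf r * r - Q r * 1) / (r * r) = \<phi>'"
            unfolding \<phi>'_def using r0'' by (simp add: field_simps power2_eq_square)
          ultimately show ?thesis unfolding r_def by simp
        qed
        show "\<And>H. (\<forall>h. h \<bullet> (H *v h) \<le> 0) \<Longrightarrow> (\<Sum>i\<in>UNIV. (Amat F1 F2 g1 g2 c1 c2 Shat x *v (H *v axis i 1))$i) \<le> 0"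
        proof -
          fix H :: "real^'n^'n" assume neg: "\<forall>h. h \<bullet> (H *v h) \<le> 0"
          have xr0: "norm x \<ge> r0" using xK by simp
          show "(\<Sum>i\<in>UNIV. (Amat F1 F2 g1 g2 c1 c2 Shat x *v (H *v axis i 1))$i) \<le> 0"
            unfolding Aform[OF xr0]
            by (rule trace_A_neg[OF x0 pf_pos[OF xr0]]) (use mf_pos[OF xr0] neg in auto)
        qed
      qed
      have Lw0: "Lop (Amat F1 F2 g1 g2 c1 c2 Shat) (bvec F1 F2 g1 g2 c1 c2 Shat) wt Dw x t \<le> 0"
        using Lw xU tT unfolding F1e F2e g1e g2e by blast
      have nx: "norm x = r" and cn: "real CARD('n) = nn" using r_def nn_def by simp_all
      have rr0: "r \<ge> r0" using rpos by simp
      have Er: "E r > 0" unfolding E_def using Mpos by simp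
      have mfr: "mf r \<le> mhi" "0 < mf r" using mf_hi[OF rr0] mf_pos[OF rr0] by auto
      have bt: "bvec F1 F2 g1 g2 c1 c2 Shat x \<bullet> (\<phi> r *\<^sub>R x) \<le> \<beta>0 * \<bar>Q r\<bar>"
      proof -
        have "bvec F1 F2 g1 g2 c1 c2 Shat x \<bullet> (\<phi> r *\<^sub>R x) \<le> norm (bvec F1 F2 g1 g2 c1 c2 Shat x) * norm (\<phi> r *\<^sub>R x)"
          by (rule norm_cauchy_schwarz)
        also have "norm (\<phi> r *\<^sub>R x) = \<bar>Q r\<bar>" unfolding \<phi>_def using r0'' nx by (simp add: abs_div)
        also have "norm (bvec F1 F2 g1 g2 c1 c2 Shat x) * \<bar>Q r\<bar> \<le> \<beta>0 * \<bar>Q r\<bar>"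
          using bbound[of x] rr0 nx by (intro mult_right_mono) auto
        finally show ?thesis .
      qed
      have alg: "\<phi>' * r + nn * \<phi> r = E r * mf r + (nn - 1) * Q r / r"
        unfolding \<phi>'_def \<phi>_def using r0'' by (simp add: field_simps power2_eq_square)
      define X where "X = M / L"
      have Xpos: "X > 0" unfolding X_def using Mpos Lpos by simp
      have Qr: "Q r = - E r + X" unfolding Q_def X_def ..
      have e2: "(nn - 1) * Q r / r \<le> (nn - 1) / r0 * X"
      proof -
        have "(nn - 1) * Q r / r \<le> (nn - 1) * X / r"
          using Qr Er nn2 r0'' by (intro divide_right_mono mult_left_mono) auto
        also have "\<dots> \<le> ((nn - 1) * X) / r0"
          using nn2 Xpos r0_pos rr0 by (intro divide_left_mono) auto
        finally show ?thesis by simp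
      qed
      have e3: "\<beta>0 * \<bar>Q r\<bar> \<le> \<beta>0 * E r + \<beta>0 * X"
      proof -
        have "\<bar>Q r\<bar> \<le> E r + X" using Qr Er Xpos by simp
        then show ?thesis using \<beta>0_nn by (metis distrib_left mult_left_mono)
      qed
      have e1: "E r * mf r \<le> E r * mhi" using mfr Er by simp
      have PtX: "Pt = E r * K + X * C" unfolding Pt_def X_def by simp
      have KC: "E r * K + X * C = E r * mhi + E r * \<beta>0 + E r + ((nn - 1) / r0 * X + \<beta>0 * X + X)"
        unfolding K_def C_def by (simp add: algebra_simps)
      have "Pt - (\<phi>' * r + nn * \<phi> r) - bvec F1 F2 g1 g2 c1 c2 Shat x \<bullet> (\<phi> r *\<^sub>R x) \<ge> E r + X"
        using bt alg e1 e2 e3 PtX KC by (simp add: algebra_simps)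
      then have "Lop (Amat F1 F2 g1 g2 c1 c2 Shat) (bvec F1 F2 g1 g2 c1 c2 Shat) wt Dw x t \<ge> E r + X"
        using core_res unfolding nx cn by linarith
      then show False using Lw0 Er Xpos by linarith
    qed
    moreover have "(y, s) \<in> Ks" using y s unfolding Ks_def by simp
    ultimately have "v (y, s) \<le> 0" using z0(2) by (meson order_trans)
    then show ?thesis unfolding v_def by simp
  qed
  define bnd where "bnd r = M * exp (K * T - mlo * (r - r0))" for r
  have wb: "w y t \<le> bnd (norm y)" if y: "r0 \<le> norm y" and t: "0 \<le> t" "t \<le> T" for y t
  proof (rule field_le_epsilon)
    fix e :: real assume e: "e > 0"
    define r where "r = norm y"
    define Xr where "Xr = M * (Lam r + C * T)"
    have Xr: "Xr \<ge> 0" unfolding Xr_def using Mpos Cpos Lam_nn[of r] y T_pos r_def by simp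
    define R where "R = max (r + 1) (r0 + Xr / (mlo * e) + 1)"
    have R: "R > r0" "r \<le> R" unfolding R_def using y r_def by auto
    have LR: "Lam R \<ge> mlo * (Xr / (mlo * e) + 1)"
    proof -
      have "mlo * (Xr / (mlo * e) + 1) \<le> mlo * (R - r0)" using mlo_pos unfolding R_def by (intro mult_left_mono) auto
      then show ?thesis using Lam_lo[of R] R by simp
    qed
    have LRpos: "Lam R > 0" using LR mlo_pos Xr e by (smt (verit) divide_nonneg_pos mult_pos_pos)
    have "mlo * (Xr / (mlo * e) + 1) = Xr / e + mlo" using mlo_pos e by (simp add: field_simps)
    then have LR2: "Lam R \<ge> Xr / e" using LR mlo_pos by simp
    have t2: "M * (Lam r + C * t) / Lam R \<le> e"
    proof -
      have "M * (Lam r + C * t) \<le> Xr" unfolding Xr_def using Mpos Cpos t by (intro mult_left_mono) auto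
      then have "M * (Lam r + C * t) / Lam R \<le> Xr / Lam R" using LRpos by (simp add: divide_right_mono)
      also have "\<dots> \<le> e" using LR2 LRpos e by (simp add: divide_simps mult.commute)
      finally show ?thesis .
    qed
    have t1: "M * exp (K * t - Lam r) \<le> bnd r"
    proof -
      have "K * t - Lam r \<le> K * T - mlo * (r - r0)" using Kpos t Lam_lo[of r] y r_def by (smt (verit) mult_left_mono)
      then show ?thesis unfolding bnd_def using Mpos by simp
    qed
    have "w y t \<le> Psi R y t" by (rule comp[OF R(1) y _ t]) (use R r_def in simp)
    also have "\<dots> \<le> bnd r + e" unfolding Psi_def r_def[symmetric] using t1 t2 by simp
    finally show "w y t \<le> bnd (norm y) + e" unfolding r_def .
  qed
  have supb: "Sup {w x t | x t. norm x = r \<and> 0 \<le> t \<and> t \<le> T} \<le> bnd r" if r: "r \<ge> r0" for r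
  proof (rule cSup_least)
    obtain k :: 'n where True by simp
    have "norm (r *\<^sub>R axis k (1::real)) = r" using r r0_pos by simp
    then show "{w x t | x t. norm x = r \<and> 0 \<le> t \<and> t \<le> T} \<noteq> {}" using T_pos by fastforce
    show "\<And>z. z \<in> {w x t | x t. norm x = r \<and> 0 \<le> t \<and> t \<le> T} \<Longrightarrow> z \<le> bnd r"
      using wb r by fastforce
  qed
  have evb: "eventually (\<lambda>r. bnd r < e) at_top" if e: "e > 0" for e
  proof -
    define N where "N = max r0 (r0 + (K * T - ln (e / M)) / mlo + 1)"
    have "bnd r < e" if rN: "r \<ge> N" for r
    proof -
      have "mlo * (r - r0) \<ge> mlo * ((K * T - ln (e / M)) / mlo + 1)"
        using rN mlo_pos unfolding N_def by (intro mult_left_mono) auto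
      also have "mlo * ((K * T - ln (e / M)) / mlo + 1) = K * T - ln (e / M) + mlo"
        using mlo_pos by (simp add: field_simps)
      finally have "K * T - mlo * (r - r0) < ln (e / M)" using mlo_pos by simp
      then have "exp (K * T - mlo * (r - r0)) < e / M" using e Mpos by (metis divide_pos_pos exp_less_mono exp_ln)
      then show ?thesis unfolding bnd_def using Mpos by (simp add: field_simps)
    qed
    then show ?thesis unfolding eventually_at_top_linorder by blast
  qed
  show ?thesis
  proof (subst Limsup_le_iff, intro allI impI)
    fix y :: ereal assume y: "y > 0"
    obtain e where e: "e > 0" "ereal e \<le> y"
    proof (cases y)
      case (real e) then show ?thesis using that y by auto
    next
      case PInf then show ?thesis using that[of 1] by auto
    next
      case MInf then show ?thesis using y by auto
    qed
    have "eventually (\<lambda>r. r \<ge> r0 \<and> bnd r < e) at_top"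
      using evb[OF e(1)] eventually_ge_at_top[of r0] by eventually_elim auto
    then show "eventually (\<lambda>r. y > ereal (Sup {w x t | x t. norm x = r \<and> 0 \<le> t \<and> t \<le> T})) at_top"
    proof (rule eventually_mono)
      fix r assume "r \<ge> r0 \<and> bnd r < e"
      then have "Sup {w x t | x t. norm x = r \<and> 0 \<le> t \<and> t \<le> T} < e" using supb by fastforce
      then have "ereal (Sup {w x t | x t. norm x = r \<and> 0 \<le> t \<and> t \<le> T}) < ereal e" by simp
      then show "y > ereal (Sup {w x t | x t. norm x = r \<and> 0 \<le> t \<and> t \<le> T})" using e(2)
        by (rule less_le_trans)
    qed
  qed
qed


end
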